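(* Let $r\ge2$ be an even integer and $a<b$. On a time interval $I$, let $Q_1(t),\dots,Q_n(t)$ and $P_1(t),\dots,P_n(t)$ be differentiable with $a=Q_0<Q_1(t)<\dots<Q_n(t)<Q_{n+1}=b$, solving $$\dot Q_i=\hat u_i,\qquad \dot P_i=\frac{r-1}{r}\left(\left|\frac{\hat u_{i+1}-\hat u_i}{Q_{i+1}-Q_i}\right|^r-\left|\frac{\hat u_i-\hat u_{i-1}}{Q_i-Q_{i-1}}\right|^r\right),\quad i=1,\dots,n,$$ where $(\hat u_0,\dots,\hat u_{n+1})$, with $\hat u_0=\hat u_{n+1}=0$, is the unique solution of $$P_i=-\left|\frac{\hat u_{i+1}-\hat u_i}{Q_{i+1}-Q_i}\right|^{r-2}\frac{\hat u_{i+1}-\hat u_i}{Q_{i+1}-Q_i}+\left|\frac{\hat u_i-\hat u_{i-1}}{Q_i-Q_{i-1}}\right|^{r-2}\frac{\hat u_i-\hat u_{i-1}}{Q_i-Q_{i-1}},\quad i=1,\dots,n.$$ Let $u(\cdot,t)$ be the continuous function on $[a,b]$ that is linear on each $[Q_i(t),Q_{i+1}(t)]$ with $u(Q_i(t),t)=\hat u_i(t)$. Then there is a function $c(t)$ such that, for every $\phi\in W^{1,r}_0(a,b)$ (independent of $t$) and $t\in I$, $$\frac{d}{dt}\int_a^b|u_x|^{r-2}u_x\,\phi\,dx-\int_a^b\frac1r|u_x|^r\phi\,dx-\int_a^b u\,|u_x|^{r-2}u_x\,\phi_x\,dx=c(t)\int_a^b\phi\,dx,$$ i.e. $u$ is a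 weak solution of $\big(|u_x|^{r-2}u_x\big)_t+\big(|u_x|^{r-2}uu_x\big)_x=\frac1r|u_x|^r+c(t)$.
   Context: $W^{1,r}_0(a,b)$ is the space of functions with $\int_a^b|u|^r+|u_x|^r\,dx<\infty$ and $u(a)=u(b)=0$. The weak form is $\int_a^b\big((|u_x|^{r-2}u_x)_t-\frac1r|u_x|^r\big)\phi-u|u_x|^{r-2}u_x\phi_x\,dx=c(t)\int_a^b\phi\,dx$ for all test functions $\phi$, where for the piecewise linear $u$ the term $\int_a^b(|u_x|^{r-2}u_x)_t\phi\,dx$ is understood as $\frac{d}{dt}\int_a^b|u_x|^{r-2}u_x\phi\,dx$. *)

theory Defs
  imports "HOL-Analysis.Analysis"
begin

definition test_fun :: "real \<Rightarrow> real \<Rightarrow> (real \<Rightarrow> real) \<Rightarrow> bool" where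
  "test_fun a b \<psi> \<longleftrightarrow>
     (\<forall>k x. ((deriv ^^ k) \<psi>) differentiable (at x)) \<and>
     (\<exists>c d. a < c \<and> d < b \<and> (\<forall>x. x \<notin> {c..d} \<longrightarrow> \<psi> x = 0))"

definition weak_deriv_on :: "real \<Rightarrow> real \<Rightarrow> (real \<Rightarrow> real) \<Rightarrow> (real \<Rightarrow> real) \<Rightarrow> bool" where
  "weak_deriv_on a b f g \<longleftrightarrow>
     f absolutely_integrable_on {a..b} \<and> g absolutely_integrable_on {a..b} \<and>
     (\<forall>\<psi>. test_fun a b \<psi> \<longrightarrow>
        integral {a..b} (\<lambda>x. f x * deriv \<psi> x) = - integral {a..b} (\<lambda>x. g x * \<psi> x))"

text \<open>phi belongs to W^{1,r}_0(a,b) with weak derivative phi_x = g: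
  int_a^b |phi|^r + |phi_x|^r < infinity and phi(a) = phi(b) = 0, where phi is
  taken to be the continuous representative on [a,b].\<close>
definition W1r0 :: "nat \<Rightarrow> real \<Rightarrow> real \<Rightarrow> (real \<Rightarrow> real) \<Rightarrow> (real \<Rightarrow> real) \<Rightarrow> bool" where
  "W1r0 r a b \<phi> g \<longleftrightarrow>
     continuous_on {a..b} \<phi> \<and> weak_deriv_on a b \<phi> g \<and>
     (\<lambda>x. \<bar>\<phi> x\<bar> ^ r) integrable_on {a..b} \<and>
     (\<lambda>x. \<bar>g x\<bar> ^ r) integrable_on {a..b} \<and>
     \<phi> a = 0 \<and> \<phi> b = 0"

end

theory Submission
  imports Defs "HOL-Computational_Algebra.Polynomial"
begin

definition smoothn :: "nat \<Rightarrow> (real \<Rightarrow> real) \<Rightarrow> bool" where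
  "smoothn k f \<longleftrightarrow> (\<forall>j\<le>k. \<forall>x. ((deriv ^^ j) f) differentiable (at x))"

lemma funpow_deriv_Suc: "(deriv ^^ Suc j) f = (deriv ^^ j) (deriv f)"
  by (simp add: funpow_Suc_right del: funpow.simps)

lemma smoothn_0: "smoothn 0 f \<longleftrightarrow> (\<forall>x. f differentiable (at x))"
  by (simp add: smoothn_def)

lemma smoothn_Suc: "smoothn (Suc k) f \<longleftrightarrow> (\<forall>x. f differentiable (at x)) \<and> smoothn k (deriv f)"
proof
  assume H: "smoothn (Suc k) f"
  show "(\<forall>x. f differentiable (at x)) \<and> smoothn k (deriv f)"
  proof
    show "\<forall>x. f differentiable (at x)" using H[unfolded smoothn_def, rule_format, of 0] by simp
    show "smoothn k (deriv f)" unfolding smoothn_def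
    proof (intro allI impI)
      fix j x assume "j \<le> k"
      then have "(deriv ^^ Suc j) f differentiable (at x)"
        using H unfolding smoothn_def by (metis Suc_le_mono)
      then show "(deriv ^^ j) (deriv f) differentiable (at x)"
        by (simp only: funpow_deriv_Suc)
    qed
  qed
next
  assume H: "(\<forall>x. f differentiable (at x)) \<and> smoothn k (deriv f)"
  show "smoothn (Suc k) f" unfolding smoothn_def
  proof (intro allI impI)
    fix j x assume j: "j \<le> Suc k"
    show "(deriv ^^ j) f differentiable (at x)"
    proof (cases j)
      case 0 then show ?thesis using H by simp
    next
      case (Suc i)
      then have "i \<le> k" using j by simp
      then have "(deriv ^^ i) (deriv f) differentiable (at x)" using H by (simp add: smoothn_def)
      then show ?thesis by (simp only: Suc funpow_deriv_Suc)
    qed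
  qed
qed

lemma smoothn_mono: "smoothn (Suc k) f \<Longrightarrow> smoothn k f"
  by (simp add: smoothn_def)

lemma smoothn_DERIV: assumes "smoothn k f" shows "DERIV f x :> deriv f x"
proof -
  have "(deriv ^^ 0) f differentiable (at x)" using assms unfolding smoothn_def by blast
  then show ?thesis by (simp add: DERIV_deriv_iff_real_differentiable)
qed

lemma DERIV_differentiable: "DERIV (f::real\<Rightarrow>real) x :> D \<Longrightarrow> f differentiable (at x)"
  using real_differentiable_def by blast

lemma smoothn_add: "smoothn k f \<Longrightarrow> smoothn k g \<Longrightarrow> smoothn k (\<lambda>x. f x + g x)"
proof (induction k arbitrary: f g)
  case 0
  then show ?case by (simp add: smoothn_0 differentiable_add)
next
  case (Suc k)
  have d: "deriv (\<lambda>x. f x + g x) = (\<lambda>x. deriv f x + deriv g x)"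
    by (rule ext, rule DERIV_imp_deriv, rule DERIV_add[OF smoothn_DERIV[OF Suc.prems(1)] smoothn_DERIV[OF Suc.prems(2)]])
  have f': "smoothn k (deriv f)" and g': "smoothn k (deriv g)"
    using Suc.prems by (simp_all add: smoothn_Suc)
  have "smoothn k (\<lambda>x. deriv f x + deriv g x)" by (rule Suc.IH[OF f' g'])
  then show ?case using Suc.prems by (simp add: smoothn_Suc d)
qed

lemma smoothn_mult: "smoothn k f \<Longrightarrow> smoothn k g \<Longrightarrow> smoothn k (\<lambda>x. f x * g x)"
proof (induction k arbitrary: f g)
  case 0
  then show ?case by (simp add: smoothn_0 differentiable_mult)
next
  case (Suc k)
  have d: "deriv (\<lambda>x. f x * g x) = (\<lambda>x. deriv f x * g x + deriv g x * f x)"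
    by (rule ext, rule DERIV_imp_deriv, rule DERIV_mult[OF smoothn_DERIV smoothn_DERIV], fact+)
  have f': "smoothn k (deriv f)" and g': "smoothn k (deriv g)"
    using Suc.prems by (simp_all add: smoothn_Suc)
  have fk: "smoothn k f" and gk: "smoothn k g"
    using Suc.prems by (simp_all add: smoothn_mono)
  have "smoothn k (\<lambda>x. deriv f x * g x)" by (rule Suc.IH[OF f' gk])
  moreover have "smoothn k (\<lambda>x. deriv g x * f x)" by (rule Suc.IH[OF g' fk])
  ultimately have "smoothn k (\<lambda>x. deriv f x * g x + deriv g x * f x)" by (rule smoothn_add)
  then show ?case using Suc.prems by (simp add: smoothn_Suc d)
qed

lemma smoothn_const: "smoothn k (\<lambda>x. c)"
proof (induction k arbitrary: c)
  case 0 then show ?case by (simp add: smoothn_0)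
next
  case (Suc k)
  have "deriv (\<lambda>x. c) = (\<lambda>x. 0)" by (rule ext) simp
  then show ?case using Suc by (simp add: smoothn_Suc)
qed

lemma smoothn_ident: "smoothn k (\<lambda>x. x)"
proof (cases k)
  case 0 then show ?thesis by (simp add: smoothn_0)
next
  case (Suc k)
  have "deriv (\<lambda>x. x) = (\<lambda>x. 1)" by (rule ext) simp
  then show ?thesis using Suc by (simp add: smoothn_Suc smoothn_const)
qed

lemma affine_DERIV: "((\<lambda>x. \<alpha> * x + \<beta>) has_real_derivative \<alpha>) (at (x::real))"
  by (auto intro!: derivative_eq_intros)

lemma smoothn_affine: "smoothn k f \<Longrightarrow> smoothn k (\<lambda>x. f (\<alpha> * x + \<beta>))"
proof (induction k arbitrary: f)
  case 0
  have "(\<lambda>x. f (\<alpha> * x + \<beta>)) differentiable (at x)" for x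
  proof -
    have "DERIV (\<lambda>x. f (\<alpha> * x + \<beta>)) x :> deriv f (\<alpha> * x + \<beta>) * \<alpha>"
      by (rule DERIV_chain2[OF smoothn_DERIV[OF 0] affine_DERIV])
    then show ?thesis by (rule DERIV_differentiable)
  qed
  then show ?case by (simp add: smoothn_0)
next
  case (Suc k)
  have D: "DERIV (\<lambda>x. f (\<alpha> * x + \<beta>)) x :> \<alpha> * deriv f (\<alpha> * x + \<beta>)" for x
  proof -
    have "DERIV (\<lambda>x. f (\<alpha> * x + \<beta>)) x :> deriv f (\<alpha> * x + \<beta>) * \<alpha>"
      by (rule DERIV_chain2[OF smoothn_DERIV[OF Suc.prems] affine_DERIV])
    then show ?thesis by (simp add: mult.commute)
  qed
  have d: "deriv (\<lambda>x. f (\<alpha> * x + \<beta>)) = (\<lambda>x. \<alpha> * deriv f (\<alpha> * x + \<beta>))"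
    by (rule ext, rule DERIV_imp_deriv, rule D)
  have 0: "smoothn k (deriv f)" using Suc.prems by (simp add: smoothn_Suc)
  have 1: "smoothn k (\<lambda>x. \<alpha> * deriv f (\<alpha> * x + \<beta>))"
    by (rule smoothn_mult[OF smoothn_const Suc.IH[OF 0]])
  have 2: "\<forall>x. (\<lambda>x. f (\<alpha> * x + \<beta>)) differentiable (at x)"
    using D DERIV_differentiable by blast
  show ?case unfolding smoothn_Suc d using 1 2 by blast
qed

definition Gp :: "real poly \<Rightarrow> real \<Rightarrow> real" where
  "Gp p x = (if 0 < x then poly p (inverse x) * exp (- inverse x) else 0)"

definition pstep :: "real poly \<Rightarrow> real poly" where
  "pstep p = [:0, 0, 1:] * (p - pderiv p)"

lemma poly_exp_decay: "((\<lambda>y::real. poly p y * y * exp (- y)) \<longlongrightarrow> 0) at_top"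
proof -
  have e: "poly p y * y * exp (- y) = (\<Sum>i\<le>degree p. coeff p i * (y ^ Suc i / exp y))" for y
    by (simp add: poly_altdef sum_distrib_left sum_distrib_right exp_minus divide_inverse mult_ac)
  have "((\<lambda>y. \<Sum>i\<le>degree p. coeff p i * (y ^ Suc i / exp y)) \<longlongrightarrow> (\<Sum>i\<le>degree p. coeff p i * 0)) at_top"
    by (intro tendsto_sum tendsto_mult tendsto_const tendsto_power_div_exp_0)
  then show ?thesis by (simp add: e)
qed

lemma Gp_DERIV: "DERIV (Gp p) x :> Gp (pstep p) x"
proof (cases "0 < x")
  case True
  have "DERIV (\<lambda>y. poly p (inverse y) * exp (- inverse y)) x :>
     poly (pderiv p) (inverse x) * (- (inverse x * inverse x)) * exp (- inverse x)
     + poly p (inverse x) * (exp (- inverse x) * (inverse x * inverse x))"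
    using True
    by (auto intro!: derivative_eq_intros DERIV_chain2[OF poly_DERIV] simp: power2_eq_square)
  moreover have "poly (pderiv p) (inverse x) * (- (inverse x * inverse x)) * exp (- inverse x)
     + poly p (inverse x) * (exp (- inverse x) * (inverse x * inverse x)) = Gp (pstep p) x"
    using True by (simp add: Gp_def pstep_def algebra_simps)
  ultimately have "DERIV (\<lambda>y. poly p (inverse y) * exp (- inverse y)) x :> Gp (pstep p) x" by simp
  then show ?thesis
    by (rule has_field_derivative_transform_within_open[where S="{0<..}"]) (use True in \<open>auto simp: Gp_def\<close>)
next
  case False
  show ?thesis
  proof (cases "x < 0")
    case True
    have "DERIV (\<lambda>y. 0) x :> Gp (pstep p) x" using True by (simp add: Gp_def)
    then show ?thesis
      by (rule has_field_derivative_transform_within_open[where S="{..<0}"]) (use True in \<open>auto simp: Gp_def\<close>)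
  next
    case False
    with \<open>\<not> 0 < x\<close> have x0: "x = 0" by simp
    have "((\<lambda>y. (Gp p y - Gp p 0) / (y - 0)) \<longlongrightarrow> 0) (at 0)"
    proof (rule filterlim_split_at)
      have "eventually (\<lambda>y. (Gp p y - Gp p 0) / (y - 0) = 0) (at_left (0::real))"
        unfolding eventually_at_left_field by (rule exI[of _ "-1"]) (auto simp: Gp_def)
      then show "((\<lambda>y. (Gp p y - Gp p 0) / (y - 0)) \<longlongrightarrow> 0) (at_left 0)"
        by (rule tendsto_eventually)
    next
      have "((\<lambda>y. (Gp p (inverse y) - Gp p 0) / (inverse y - 0)) \<longlongrightarrow> 0) at_top"
      proof (rule Lim_transform_eventually[OF poly_exp_decay[of p]])
        show "\<forall>\<^sub>F y in at_top. poly p y * y * exp (- y) = (Gp p (inverse y) - Gp p 0) / (inverse y - 0)"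
          using eventually_gt_at_top[of 0] by eventually_elim (simp add: Gp_def field_simps)
      qed
      then show "((\<lambda>y. (Gp p y - Gp p 0) / (y - 0)) \<longlongrightarrow> 0) (at_right 0)"
        by (simp add: filterlim_at_right_to_top)
    qed
    then show ?thesis using x0 by (simp add: has_field_derivative_iff Gp_def)
  qed
qed

lemma deriv_Gp: "deriv (Gp p) = Gp (pstep p)"
  by (rule ext, rule DERIV_imp_deriv, rule Gp_DERIV)

lemma smoothn_Gp: "smoothn k (Gp p)"
proof (induction k arbitrary: p)
  case 0
  then show ?case using Gp_DERIV real_differentiable_def by (auto simp: smoothn_0)
next
  case (Suc k)
  then show ?case using Gp_DERIV real_differentiable_def by (auto simp: smoothn_Suc deriv_Gp)
qed

lemma Gp_one_pos: "0 < x \<Longrightarrow> Gp 1 x > 0" by (simp add: Gp_def)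
lemma Gp_one_nonneg: "Gp 1 x \<ge> 0" by (simp add: Gp_def)
lemma Gp_zero: "x \<le> 0 \<Longrightarrow> Gp p x = 0" by (simp add: Gp_def)

definition bump :: "real \<Rightarrow> real" where
  "bump x = Gp 1 x * Gp 1 ((-1) * x + 1)"

lemma smoothn_bump: "smoothn k bump"
  unfolding bump_def by (intro smoothn_mult smoothn_Gp smoothn_affine)

lemma bump_DERIV: "DERIV bump x :> deriv bump x"
  by (rule smoothn_DERIV[OF smoothn_bump[of 0]])

lemma bump_nonneg: "0 \<le> bump x"
  by (simp add: bump_def Gp_one_nonneg)

lemma bump_zero: "x \<le> 0 \<or> 1 \<le> x \<Longrightarrow> bump x = 0"
  by (auto simp: bump_def Gp_def)

lemma bump_half: "bump (1/2) > 0"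
  by (simp add: bump_def Gp_def)

lemma cont_bump: "continuous_on UNIV bump"
  by (rule DERIV_continuous_on) (use bump_DERIV has_field_derivative_at_within in blast)

lemma cont_bump_comp[continuous_intros]: "continuous_on S f \<Longrightarrow> continuous_on S (\<lambda>x. bump (f x))"
  by (rule continuous_on_compose2[OF cont_bump]) auto

definition Sraw :: "real \<Rightarrow> real" where
  "Sraw y = integral {-1..y} bump"

definition Zb :: real where "Zb = integral {0..1} bump"

lemma bump_int: "bump integrable_on {u..v}"
  by (rule integrable_continuous_interval) (rule continuous_on_subset[OF cont_bump], simp)

lemma Sraw_zero: "y \<le> 0 \<Longrightarrow> Sraw y = 0"
proof -
  assume y: "y \<le> 0"
  have "Sraw y = integral {-1..y} (\<lambda>_. 0::real)"
    unfolding Sraw_def by (rule integral_cong) (use y bump_zero in auto)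
  then show ?thesis by simp
qed

lemma Zb_pos: "Zb > 0"
proof -
  have ge: "Zb \<ge> 0" unfolding Zb_def by (rule integral_nonneg[OF bump_int]) (simp add: bump_nonneg)
  have "Zb \<noteq> 0"
  proof
    assume "Zb = 0"
    then have hi: "(bump has_integral 0) (cbox 0 1)"
      using bump_int[of 0 1] unfolding Zb_def by (simp add: cbox_interval has_integral_integral)
    have "bump (1/2) = 0"
      by (rule has_integral_0_cbox_imp_0[OF _ _ hi])
         (auto simp: cbox_interval box_real bump_nonneg intro: continuous_on_subset[OF cont_bump])
    then show False using bump_half by simp
  qed
  then show ?thesis using ge by simp
qed

lemma Sraw_one: "1 \<le> y \<Longrightarrow> Sraw y = Zb"
proof -
  assume y: "1 \<le> y"
  have "Sraw y = integral {-1..0} bump + integral {0..y} bump"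
    unfolding Sraw_def by (rule Henstock_Kurzweil_Integration.integral_combine[symmetric]) (use y bump_int in auto)
  also have "integral {-1..0} bump = 0" using Sraw_zero[of 0] by (simp add: Sraw_def)
  also have "integral {0..y} bump = integral {0..1} bump + integral {1..y} bump"
    by (rule Henstock_Kurzweil_Integration.integral_combine[symmetric]) (use y bump_int in auto)
  also have "integral {1..y} bump = integral {1..y} (\<lambda>_. 0::real)"
    by (rule integral_cong) (use bump_zero in auto)
  finally show ?thesis by (simp add: Zb_def)
qed

lemma Sraw_bounds: "0 \<le> Sraw y \<and> Sraw y \<le> Zb"
proof (cases "y \<le> 0")
  case True then show ?thesis using Sraw_zero Zb_pos by simp
next
  case False
  show ?thesis
  proof (cases "1 \<le> y")
    case True then show ?thesis using Sraw_one Zb_pos by simp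
  next
    case False
    with \<open>\<not> y \<le> 0\<close> have y: "0 < y" "y < 1" by auto
    have "Sraw y = integral {-1..0} bump + integral {0..y} bump"
      unfolding Sraw_def by (rule Henstock_Kurzweil_Integration.integral_combine[symmetric]) (use y bump_int in auto)
    also have "integral {-1..0} bump = 0" using Sraw_zero[of 0] by (simp add: Sraw_def)
    finally have 1: "Sraw y = integral {0..y} bump" by simp
    have 2: "Zb = integral {0..y} bump + integral {y..1} bump"
      unfolding Zb_def by (rule Henstock_Kurzweil_Integration.integral_combine[symmetric]) (use y bump_int in auto)
    have "integral {0..y} bump \<ge> 0" "integral {y..1} bump \<ge> 0"
      by (auto intro!: integral_nonneg bump_int bump_nonneg)
    then show ?thesis using 1 2 by simp
  qed
qed

lemma Sraw_DERIV: "DERIV Sraw x :> bump x"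
proof (cases "x < 0")
  case True
  have "DERIV (\<lambda>_. 0) x :> bump x" using True bump_zero by simp
  then show ?thesis
    by (rule has_field_derivative_transform_within_open[where S="{..<0}"])
       (use True Sraw_zero in auto)
next
  case False
  then have x: "-1 < x" by simp
  have "((\<lambda>u. integral {-1..u} bump) has_vector_derivative bump x) (at x within {-1..x+1})"
    by (rule integral_has_vector_derivative) (use x in \<open>auto intro: continuous_on_subset[OF cont_bump]\<close>)
  moreover have "at x within {-1..x+1} = at x"
    by (rule at_within_interior) (use x in auto)
  ultimately have "((\<lambda>u. integral {-1..u} bump) has_real_derivative bump x) (at x)"
    by (simp add: has_real_derivative_iff_has_vector_derivative)
  then show ?thesis by (simp add: Sraw_def[abs_def])
qed

definition stp :: "real \<Rightarrow> real" where "stp y = Sraw y / Zb"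

lemma stp_DERIV: "DERIV stp x :> bump x / Zb"
  unfolding stp_def[abs_def] by (rule DERIV_cdivide[OF Sraw_DERIV])

lemma deriv_stp: "deriv stp = (\<lambda>x. bump x * (1 / Zb))"
  by (rule ext, rule DERIV_imp_deriv) (use stp_DERIV in simp)

lemma smoothn_stp: "smoothn k stp"
proof (cases k)
  case 0 then show ?thesis using stp_DERIV DERIV_differentiable by (simp add: smoothn_0) blast
next
  case (Suc j)
  have "smoothn j (\<lambda>x. bump x * (1 / Zb))" by (intro smoothn_mult smoothn_bump smoothn_const)
  then show ?thesis using Suc stp_DERIV DERIV_differentiable by (simp add: smoothn_Suc deriv_stp) blast
qed

lemma stp_zero: "y \<le> 0 \<Longrightarrow> stp y = 0" by (simp add: stp_def Sraw_zero)
lemma stp_one: "1 \<le> y \<Longrightarrow> stp y = 1" using Zb_pos by (simp add: stp_def Sraw_one)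
lemma stp_bounds: "0 \<le> stp y \<and> stp y \<le> 1"
  using Sraw_bounds[of y] Zb_pos by (simp add: stp_def divide_le_eq_1)

lemma cont_stp: "continuous_on UNIV stp"
  by (rule DERIV_continuous_on) (use stp_DERIV has_field_derivative_at_within in blast)

lemma cont_stp_comp[continuous_intros]: "continuous_on S f \<Longrightarrow> continuous_on S (\<lambda>x. stp (f x))"
  by (rule continuous_on_compose2[OF cont_stp]) auto

lemma kernel_limit:
  fixes w :: "real \<Rightarrow> real" and K :: "nat \<Rightarrow> real \<Rightarrow> real" and r :: "nat \<Rightarrow> real"
  assumes wc: "continuous_on {a..b} w" and p: "p \<in> {a..b}"
    and Kc: "\<And>k. continuous_on {a..b} (K k)"
    and Kn: "\<And>k x. 0 \<le> K k x"
    and K1: "\<And>k. integral {a..b} (K k) = 1"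
    and Ks: "\<And>k x. K k x \<noteq> 0 \<Longrightarrow> x \<in> {a..b} \<Longrightarrow> \<bar>x - p\<bar> < r k"
    and r: "\<And>\<delta>. \<delta> > 0 \<Longrightarrow> eventually (\<lambda>k. r k < \<delta>) sequentially"
  shows "(\<lambda>k. integral {a..b} (\<lambda>x. w x * K k x)) \<longlonglongrightarrow> w p"
proof (rule tendstoI)
  fix e :: real assume e: "e > 0"
  then have e2: "e/2 > 0" by simp
  obtain \<delta> where \<delta>: "\<delta> > 0" "\<And>x. x \<in> {a..b} \<Longrightarrow> dist x p < \<delta> \<Longrightarrow> dist (w x) (w p) < e/2"
    using wc p e2 unfolding continuous_on_iff by metis
  show "eventually (\<lambda>k. dist (integral {a..b} (\<lambda>x. w x * K k x)) (w p) < e) sequentially"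
    using r[OF \<delta>(1)]
  proof eventually_elim
    case (elim k)
    have iwK: "(\<lambda>x. w x * K k x) integrable_on {a..b}"
      by (intro integrable_continuous_interval continuous_on_mult wc Kc)
    have iwpK: "(\<lambda>x. w p * K k x) integrable_on {a..b}"
      by (intro integrable_continuous_interval continuous_intros Kc)
    have idK: "(\<lambda>x. (w x - w p) * K k x) integrable_on {a..b}"
      by (intro integrable_continuous_interval continuous_intros wc Kc)
    have ieK: "(\<lambda>x. (e/2) * K k x) integrable_on {a..b}"
      by (intro integrable_continuous_interval continuous_intros Kc)
    have imeK: "(\<lambda>x. - (e/2) * K k x) integrable_on {a..b}"
      by (intro integrable_continuous_interval continuous_intros Kc)
    have eq: "integral {a..b} (\<lambda>x. (w x - w p) * K k x) = integral {a..b} (\<lambda>x. w x * K k x) - w p"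
    proof -
      have "integral {a..b} (\<lambda>x. (w x - w p) * K k x) = integral {a..b} (\<lambda>x. w x * K k x - w p * K k x)"
        by (simp add: left_diff_distrib)
      also have "\<dots> = integral {a..b} (\<lambda>x. w x * K k x) - integral {a..b} (\<lambda>x. w p * K k x)"
        by (rule integral_diff[OF iwK iwpK])
      also have "integral {a..b} (\<lambda>x. w p * K k x) = w p" using K1[of k] by simp
      finally show ?thesis .
    qed
    have bnd: "\<bar>(w x - w p) * K k x\<bar> \<le> (e/2) * K k x" if x: "x \<in> {a..b}" for x
    proof (cases "K k x = 0")
      case True then show ?thesis by simp
    next
      case False
      then have "\<bar>x - p\<bar> < \<delta>" using Ks[OF False x] elim by simp
      then have "\<bar>w x - w p\<bar> < e/2" using \<delta>(2)[OF x] by (simp add: dist_real_def)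
      then have "\<bar>w x - w p\<bar> * K k x \<le> (e/2) * K k x" using Kn[of k x] by (intro mult_right_mono) auto
      then show ?thesis using Kn[of k x] by (simp add: abs_mult abs_of_nonneg)
    qed
    have up: "integral {a..b} (\<lambda>x. (w x - w p) * K k x) \<le> integral {a..b} (\<lambda>x. (e/2) * K k x)"
    proof (rule integral_le[OF idK ieK])
      fix x assume x: "x \<in> {a..b}"
      show "(w x - w p) * K k x \<le> (e/2) * K k x" using abs_le_D1[OF bnd[OF x]] .
    qed
    have lo: "integral {a..b} (\<lambda>x. - (e/2) * K k x) \<le> integral {a..b} (\<lambda>x. (w x - w p) * K k x)"
    proof (rule integral_le[OF imeK idK])
      fix x assume x: "x \<in> {a..b}"
      have "- ((w x - w p) * K k x) \<le> (e/2) * K k x" using abs_le_D2[OF bnd[OF x]] .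
      then show "- (e/2) * K k x \<le> (w x - w p) * K k x" by simp
    qed
    have i1: "integral {a..b} (\<lambda>x. (e/2) * K k x) = e/2" using K1[of k] by simp
    have i2: "integral {a..b} (\<lambda>x. - (e/2) * K k x) = - (e/2)" using K1[of k] by simp
    have "\<bar>integral {a..b} (\<lambda>x. (w x - w p) * K k x)\<bar> \<le> e/2"
      unfolding abs_le_iff using up lo i1 i2 by linarith
    then show ?case using eq e by (simp add: dist_real_def)
  qed
qed

lemma eps_small:
  fixes L \<delta> :: real
  assumes "L > 0" "\<delta> > 0"
  shows "eventually (\<lambda>k. L / (4 * (real k + 1)) < \<delta>) sequentially"
proof -
  obtain N :: nat where N: "L / \<delta> < real N" using reals_Archimedean2 by blast
  show ?thesis unfolding eventually_sequentially
  proof (intro exI[of _ N] allI impI)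
    fix k assume k: "N \<le> k"
    have "L < real N * \<delta>" using N assms by (simp add: divide_less_eq)
    also have "real N * \<delta> \<le> (4 * (real k + 1)) * \<delta>"
      using k assms by (intro mult_right_mono) auto
    finally show "L / (4 * (real k + 1)) < \<delta>"
      by (simp add: divide_less_eq mult.commute)
  qed
qed

lemma abs_int_cont_mult:
  fixes f g :: "real \<Rightarrow> real"
  assumes "continuous_on {a..b} f" "g absolutely_integrable_on {a..b}"
  shows "(\<lambda>x. f x * g x) absolutely_integrable_on {a..b}"
proof (rule absolutely_integrable_bounded_measurable_product_real)
  show "f \<in> borel_measurable (lebesgue_on {a..b})"
    by (rule continuous_imp_measurable_on_sets_lebesgue[OF assms(1)]) simp
  show "bounded (f ` {a..b})"
    by (rule compact_imp_bounded[OF compact_continuous_image[OF assms(1)]]) simp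
qed (use assms in auto)

lemma weak_affine:
  fixes \<phi> g :: "real \<Rightarrow> real"
  assumes cont: "continuous_on {a..b} \<phi>" and wd: "weak_deriv_on a b \<phi> g"
    and ac: "a \<le> c" and cd: "c < d" and db: "d \<le> b"
  shows "integral {c..d} (\<lambda>x. (\<alpha> + \<beta> * x) * g x)
         = (\<alpha> + \<beta> * d) * \<phi> d - (\<alpha> + \<beta> * c) * \<phi> c - \<beta> * integral {c..d} \<phi>"
proof -
  define lf where "lf x = \<alpha> + \<beta> * x" for x
  define \<epsilon> where "\<epsilon> k = (d - c) / (4 * (real k + 1))" for k :: nat
  have \<epsilon>pos: "\<epsilon> k > 0" for k using cd by (simp add: \<epsilon>_def)
  have \<epsilon>4: "4 * \<epsilon> k \<le> d - c" for k
  proof -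
    have "4 * \<epsilon> k * (real k + 1) = d - c" by (simp add: \<epsilon>_def field_simps)
    moreover have "4 * \<epsilon> k \<le> 4 * \<epsilon> k * (real k + 1)" using \<epsilon>pos[of k] by simp
    ultimately show ?thesis by simp
  qed
  have \<epsilon>lim: "eventually (\<lambda>k. \<epsilon> k < \<delta>) sequentially" if "\<delta> > 0" for \<delta>
    unfolding \<epsilon>_def by (rule eps_small) (use cd that in auto)
  define S1 where "S1 k x = stp ((x - c) / \<epsilon> k - 1)" for k x
  define S2 where "S2 k x = stp ((d - x) / \<epsilon> k - 1)" for k x
  define K1 where "K1 k x = bump ((x - c) / \<epsilon> k - 1) / (Zb * \<epsilon> k)" for k x
  define K2 where "K2 k x = bump ((d - x) / \<epsilon> k - 1) / (Zb * \<epsilon> k)" for k x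
  define \<psi> where "\<psi> k x = lf x * (S1 k x * S2 k x)" for k x
  have gabs: "g absolutely_integrable_on {a..b}" and \<phi>abs: "\<phi> absolutely_integrable_on {a..b}"
    and test: "\<And>\<psi>. test_fun a b \<psi> \<Longrightarrow>
        integral {a..b} (\<lambda>x. \<phi> x * deriv \<psi> x) = - integral {a..b} (\<lambda>x. g x * \<psi> x)"
    using wd unfolding weak_deriv_on_def by auto
  have Zb0: "Zb \<noteq> 0" using Zb_pos by simp
  have dS1: "DERIV (S1 k) x :> K1 k x" for k x
  proof -
    have "DERIV (\<lambda>x. stp ((x - c) / \<epsilon> k - 1)) x :> bump ((x - c) / \<epsilon> k - 1) / Zb * (1 / \<epsilon> k)"
      by (rule DERIV_chain2[OF stp_DERIV]) (use \<epsilon>pos[of k] in \<open>auto intro!: derivative_eq_intros\<close>)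
    then show ?thesis by (simp add: S1_def[abs_def] K1_def)
  qed
  have dS2: "DERIV (S2 k) x :> - K2 k x" for k x
  proof -
    have "DERIV (\<lambda>x. stp ((d - x) / \<epsilon> k - 1)) x :> bump ((d - x) / \<epsilon> k - 1) / Zb * (- 1 / \<epsilon> k)"
      by (rule DERIV_chain2[OF stp_DERIV]) (use \<epsilon>pos[of k] in \<open>auto intro!: derivative_eq_intros\<close>)
    then show ?thesis by (simp add: S2_def[abs_def] K2_def)
  qed
  have dlf: "DERIV lf x :> \<beta>" for x
    unfolding lf_def[abs_def] by (auto intro!: derivative_eq_intros)
  have S1_0: "S1 k x = 0" if "x \<le> c + \<epsilon> k" for k x
  proof -
    have "(x - c) / \<epsilon> k - 1 \<le> 0" using that \<epsilon>pos[of k] by (simp add: field_simps)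
    then show ?thesis by (simp add: S1_def stp_zero)
  qed
  have S2_0: "S2 k x = 0" if "x \<ge> d - \<epsilon> k" for k x
  proof -
    have "(d - x) / \<epsilon> k - 1 \<le> 0" using that \<epsilon>pos[of k] by (simp add: field_simps)
    then show ?thesis by (simp add: S2_def stp_zero)
  qed
  have S1_1: "S1 k x = 1" if "x \<ge> c + 2 * \<epsilon> k" for k x
  proof -
    have "(x - c) / \<epsilon> k - 1 \<ge> 1" using that \<epsilon>pos[of k] by (simp add: field_simps)
    then show ?thesis by (simp add: S1_def stp_one)
  qed
  have S2_1: "S2 k x = 1" if "x \<le> d - 2 * \<epsilon> k" for k x
  proof -
    have "(d - x) / \<epsilon> k - 1 \<ge> 1" using that \<epsilon>pos[of k] by (simp add: field_simps)
    then show ?thesis by (simp add: S2_def stp_one)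
  qed
  have K1_supp: "c + \<epsilon> k < x \<and> x < c + 2 * \<epsilon> k" if "K1 k x \<noteq> 0" for k x
  proof -
    have "bump ((x - c) / \<epsilon> k - 1) \<noteq> 0" using that by (auto simp: K1_def)
    then have "0 < (x - c) / \<epsilon> k - 1 \<and> (x - c) / \<epsilon> k - 1 < 1" by (meson bump_zero not_le)
    then show ?thesis using \<epsilon>pos[of k] by (simp add: field_simps)
  qed
  have K2_supp: "d - 2 * \<epsilon> k < x \<and> x < d - \<epsilon> k" if "K2 k x \<noteq> 0" for k x
  proof -
    have "bump ((d - x) / \<epsilon> k - 1) \<noteq> 0" using that by (auto simp: K2_def)
    then have "0 < (d - x) / \<epsilon> k - 1 \<and> (d - x) / \<epsilon> k - 1 < 1" by (meson bump_zero not_le)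
    then show ?thesis using \<epsilon>pos[of k] by (simp add: field_simps)
  qed
  have K1S2: "K1 k x * S2 k x = K1 k x" for k x
  proof (cases "K1 k x = 0")
    case False
    then have "x \<le> d - 2 * \<epsilon> k" using K1_supp[OF False] \<epsilon>4[of k] by simp
    then show ?thesis using S2_1 by simp
  qed simp
  have S1K2: "S1 k x * K2 k x = K2 k x" for k x
  proof (cases "K2 k x = 0")
    case False
    then have "x \<ge> c + 2 * \<epsilon> k" using K2_supp[OF False] \<epsilon>4[of k] by simp
    then show ?thesis using S1_1 by simp
  qed simp
  have K1_nn: "0 \<le> K1 k x" for k x
    using bump_nonneg Zb_pos \<epsilon>pos[of k] by (simp add: K1_def)
  have K2_nn: "0 \<le> K2 k x" for k x
    using bump_nonneg Zb_pos \<epsilon>pos[of k] by (simp add: K2_def)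
  have S1_b: "0 \<le> S1 k x \<and> S1 k x \<le> 1" for k x by (simp add: S1_def stp_bounds)
  have S2_b: "0 \<le> S2 k x \<and> S2 k x \<le> 1" for k x by (simp add: S2_def stp_bounds)
  have \<psi>eq: "\<psi> k = (\<lambda>x. lf x * (S1 k x * S2 k x))" for k by (rule ext) (simp add: \<psi>_def)
  have d\<psi>: "DERIV (\<psi> k) x :> \<beta> * (S1 k x * S2 k x) + lf x * K1 k x - lf x * K2 k x" for k x
  proof -
    have "DERIV (\<lambda>x. lf x * (S1 k x * S2 k x)) x :>
        \<beta> * (S1 k x * S2 k x) + (K1 k x * S2 k x + - K2 k x * S1 k x) * lf x"
      by (rule DERIV_mult[OF dlf DERIV_mult[OF dS1 dS2]])
    moreover have "(K1 k x * S2 k x + - K2 k x * S1 k x) * lf x = lf x * K1 k x - lf x * K2 k x"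
    proof -
      have e2: "K2 k x * S1 k x = K2 k x" using S1K2[of k x] by (simp add: mult.commute)
      have "(K1 k x * S2 k x + - K2 k x * S1 k x) * lf x = (K1 k x * S2 k x - K2 k x * S1 k x) * lf x"
        by simp
      also have "\<dots> = (K1 k x - K2 k x) * lf x" by (simp only: K1S2 e2)
      finally show ?thesis by (simp add: algebra_simps)
    qed
    ultimately show ?thesis by (simp add: \<psi>eq add_diff_eq)
  qed
  have deriv\<psi>: "deriv (\<psi> k) x = \<beta> * (S1 k x * S2 k x) + lf x * K1 k x - lf x * K2 k x" for k x
    by (rule DERIV_imp_deriv[OF d\<psi>])
  have smS1: "smoothn j (S1 k)" for j k
  proof -
    have eq: "S1 k = (\<lambda>x. stp ((1 / \<epsilon> k) * x + (- c / \<epsilon> k - 1)))"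
      unfolding S1_def by (intro ext arg_cong[where f=stp]) (simp add: diff_divide_distrib algebra_simps)
    have "smoothn j (\<lambda>x. stp ((1 / \<epsilon> k) * x + (- c / \<epsilon> k - 1)))" by (rule smoothn_affine[OF smoothn_stp])
    then show ?thesis by (simp only: eq)
  qed
  have smS2: "smoothn j (S2 k)" for j k
  proof -
    have eq: "S2 k = (\<lambda>x. stp ((- 1 / \<epsilon> k) * x + (d / \<epsilon> k - 1)))"
      unfolding S2_def by (intro ext arg_cong[where f=stp]) (simp add: diff_divide_distrib algebra_simps)
    have "smoothn j (\<lambda>x. stp ((- 1 / \<epsilon> k) * x + (d / \<epsilon> k - 1)))" by (rule smoothn_affine[OF smoothn_stp])
    then show ?thesis by (simp only: eq)
  qed
  have smlf: "smoothn j lf" for j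
  proof -
    have "lf = (\<lambda>x. \<alpha> + \<beta> * x)" by (rule ext) (simp add: lf_def)
    then show ?thesis by (simp add: smoothn_add smoothn_mult smoothn_const smoothn_ident)
  qed
  have tf: "test_fun a b (\<psi> k)" for k
  proof -
    have 1: "\<forall>j x. (deriv ^^ j) (\<psi> k) differentiable (at x)"
    proof (intro allI)
      fix j x
      have "smoothn j (\<psi> k)" unfolding \<psi>eq by (intro smoothn_mult smlf smS1 smS2)
      then show "(deriv ^^ j) (\<psi> k) differentiable (at x)" by (simp add: smoothn_def)
    qed
    have 2: "a < c + \<epsilon> k" using ac \<epsilon>pos[of k] by simp
    have 3: "d - \<epsilon> k < b" using db \<epsilon>pos[of k] by simp
    have 4: "\<forall>x. x \<notin> {c + \<epsilon> k..d - \<epsilon> k} \<longrightarrow> \<psi> k x = 0"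
      using S1_0 S2_0 by (auto simp: \<psi>_def)
    show ?thesis unfolding test_fun_def using 1 2 3 4 by blast
  qed
  have cS1: "continuous_on S (S1 k)" for S k
    by (rule DERIV_continuous_on) (rule has_field_derivative_at_within[OF dS1])
  have cS2: "continuous_on S (S2 k)" for S k
    by (rule DERIV_continuous_on) (rule has_field_derivative_at_within[OF dS2])
  have clf: "continuous_on S lf" for S
    by (rule DERIV_continuous_on) (rule has_field_derivative_at_within[OF dlf])
  have c\<psi>: "continuous_on S (\<psi> k)" for S k
    by (rule DERIV_continuous_on) (rule has_field_derivative_at_within[OF d\<psi>])
  have cK1: "continuous_on S (K1 k)" for S k
  proof -
    have eq: "K1 k = (\<lambda>x. bump ((x - c) / \<epsilon> k - 1) / (Zb * \<epsilon> k))" by (rule ext) (simp add: K1_def)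
    have "continuous_on S (\<lambda>x. bump ((x - c) / \<epsilon> k - 1) / (Zb * \<epsilon> k))"
      by (intro continuous_intros) (use Zb0 \<epsilon>pos[of k] in auto)
    then show ?thesis by (simp only: eq)
  qed
  have cK2: "continuous_on S (K2 k)" for S k
  proof -
    have eq: "K2 k = (\<lambda>x. bump ((d - x) / \<epsilon> k - 1) / (Zb * \<epsilon> k))" by (rule ext) (simp add: K2_def)
    have "continuous_on S (\<lambda>x. bump ((d - x) / \<epsilon> k - 1) / (Zb * \<epsilon> k))"
      by (intro continuous_intros) (use Zb0 \<epsilon>pos[of k] in auto)
    then show ?thesis by (simp only: eq)
  qed
  have intK1: "integral {a..b} (K1 k) = 1" for k
  proof -
    have "(K1 k has_integral (S1 k b - S1 k a)) {a..b}"
    proof (rule fundamental_theorem_of_calculus)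
      show "a \<le> b" using ac cd db by simp
      fix x assume "x \<in> {a..b}"
        have "(S1 k has_real_derivative K1 k x) (at x within {a..b})"
          by (rule has_field_derivative_at_within[OF dS1])
        then show "(S1 k has_vector_derivative K1 k x) (at x within {a..b})"
          by (simp add: has_real_derivative_iff_has_vector_derivative)
    qed
    moreover have "S1 k b = 1" using \<epsilon>4[of k] \<epsilon>pos[of k] db by (intro S1_1) simp
    moreover have "S1 k a = 0" using \<epsilon>pos[of k] ac by (intro S1_0) simp
    ultimately show ?thesis by (simp add: integral_unique)
  qed
  have intK2: "integral {a..b} (K2 k) = 1" for k
  proof -
    have "((\<lambda>x. - K2 k x) has_integral (S2 k b - S2 k a)) {a..b}"
    proof (rule fundamental_theorem_of_calculus)
      show "a \<le> b" using ac cd db by simp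
      fix x assume "x \<in> {a..b}"
        have "(S2 k has_real_derivative - K2 k x) (at x within {a..b})"
          by (rule has_field_derivative_at_within[OF dS2])
        then show "(S2 k has_vector_derivative - K2 k x) (at x within {a..b})"
          by (simp add: has_real_derivative_iff_has_vector_derivative)
    qed
    moreover have "S2 k a = 1" using \<epsilon>4[of k] \<epsilon>pos[of k] ac by (intro S2_1) simp
    moreover have "S2 k b = 0" using \<epsilon>pos[of k] db by (intro S2_0) simp
    ultimately have "((\<lambda>x. - K2 k x) has_integral (- 1)) {a..b}" by simp
    from has_integral_neg[OF this] have "((\<lambda>x. - (- K2 k x)) has_integral - (- 1)) {a..b}" .
    then have "(K2 k has_integral 1) {a..b}" by simp
    then show ?thesis by (rule integral_unique)
  qed
  define A where "A k = integral {a..b} (\<lambda>x. \<phi> x * (S1 k x * S2 k x))" for k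
  define B where "B k = integral {a..b} (\<lambda>x. \<phi> x * lf x * K1 k x)" for k
  define C where "C k = integral {a..b} (\<lambda>x. \<phi> x * lf x * K2 k x)" for k
  define G where "G k = integral {a..b} (\<lambda>x. \<psi> k x * g x)" for k
  have iA: "(\<lambda>x. \<phi> x * (S1 k x * S2 k x)) integrable_on {a..b}" for k
    by (intro integrable_continuous_interval continuous_on_mult cont cS1 cS2)
  have iB: "(\<lambda>x. \<phi> x * lf x * K1 k x) integrable_on {a..b}" for k
    by (intro integrable_continuous_interval continuous_on_mult cont clf cK1)
  have iC: "(\<lambda>x. \<phi> x * lf x * K2 k x) integrable_on {a..b}" for k
    by (intro integrable_continuous_interval continuous_on_mult cont clf cK2)
  have ident: "\<beta> * A k + B k - C k = - G k" for k
  proof -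
    have "((\<lambda>x. \<beta> * (\<phi> x * (S1 k x * S2 k x)) + \<phi> x * lf x * K1 k x - \<phi> x * lf x * K2 k x)
        has_integral (\<beta> * A k + B k - C k)) {a..b}"
      unfolding A_def B_def C_def
      by (intro has_integral_diff has_integral_add has_integral_mult_right integrable_integral iA iB iC)
    moreover have "(\<lambda>x. \<beta> * (\<phi> x * (S1 k x * S2 k x)) + \<phi> x * lf x * K1 k x - \<phi> x * lf x * K2 k x)
        = (\<lambda>x. \<phi> x * deriv (\<psi> k) x)"
      by (rule ext) (simp add: deriv\<psi> algebra_simps)
    ultimately have "integral {a..b} (\<lambda>x. \<phi> x * deriv (\<psi> k) x) = \<beta> * A k + B k - C k"
      by (simp add: integral_unique)
    moreover have "integral {a..b} (\<lambda>x. g x * \<psi> k x) = G k"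
      unfolding G_def by (simp add: mult.commute)
    ultimately show ?thesis using test[OF tf[of k]] by simp
  qed
  have S12_lim: "eventually (\<lambda>k. S1 k x * S2 k x = (if x \<in> {c<..<d} then 1 else 0)) sequentially" for x
  proof (cases "x \<in> {c<..<d}")
    case True
    then have pos: "min ((x - c) / 2) ((d - x) / 2) > 0" by simp
    show ?thesis using \<epsilon>lim[OF pos]
    proof eventually_elim
      case (elim k)
      then have "S1 k x = 1" "S2 k x = 1" by (auto intro!: S1_1 S2_1)
      then show ?case using True by simp
    qed
  next
    case False
    then have "x \<le> c \<or> d \<le> x" by auto
    then have z: "S1 k x * S2 k x = 0" for k
      using S1_0[of x k] S2_0[of k x] \<epsilon>pos[of k] by auto
    have e: "(if x \<in> {c<..<d} then 1 else 0) = (0::real)" using False by simp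
    show ?thesis unfolding e using z by simp
  qed
  have LA: "A \<longlonglongrightarrow> integral {c..d} \<phi>"
  proof -
    let ?gA = "\<lambda>x. if x \<in> {c<..<d} then \<phi> x else 0"
    have h: "(\<lambda>x. \<bar>\<phi> x\<bar>) integrable_on {a..b}"
      using \<phi>abs unfolding absolutely_integrable_on_def by simp
    have "(\<lambda>k. integral {a..b} (\<lambda>x. \<phi> x * (S1 k x * S2 k x))) \<longlonglongrightarrow> integral {a..b} ?gA"
    proof (rule dominated_convergence(2)[OF iA h])
      fix k x assume "x \<in> {a..b}"
      have "\<bar>S1 k x * S2 k x\<bar> \<le> 1" using S1_b[of k x] S2_b[of k x]
        by (simp add: abs_mult mult_le_one)
      then show "norm (\<phi> x * (S1 k x * S2 k x)) \<le> \<bar>\<phi> x\<bar>"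
        by (simp add: abs_mult mult_left_le)
    next
      fix x assume "x \<in> {a..b}"
      show "(\<lambda>k. \<phi> x * (S1 k x * S2 k x)) \<longlonglongrightarrow> ?gA x"
      proof (rule tendsto_eventually)
        show "eventually (\<lambda>k. \<phi> x * (S1 k x * S2 k x) = ?gA x) sequentially"
          using S12_lim[of x]
        proof eventually_elim
          case (elim k)
          show ?case unfolding elim by simp
        qed
      qed
    qed
    moreover have "integral {a..b} ?gA = integral {c..d} \<phi>"
    proof -
      have "integral {a..b} ?gA = integral ({c<..<d} \<inter> {a..b}) \<phi>" by (rule integral_restrict_Int)
      also have "{c<..<d} \<inter> {a..b} = {c<..<d}" using ac db by auto
      finally show ?thesis by (simp add: integral_open_interval_real)
    qed
    ultimately show ?thesis by (simp add: A_def[abs_def])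
  qed
  have LG: "G \<longlonglongrightarrow> integral {c..d} (\<lambda>x. lf x * g x)"
  proof -
    let ?gG = "\<lambda>x. if x \<in> {c<..<d} then lf x * g x else 0"
    have iG: "(\<lambda>x. \<psi> k x * g x) integrable_on {a..b}" for k
      using abs_int_cont_mult[OF c\<psi> gabs] unfolding absolutely_integrable_on_def by blast
    have h: "(\<lambda>x. norm (lf x * g x)) integrable_on {a..b}"
      using abs_int_cont_mult[OF clf gabs] unfolding absolutely_integrable_on_def by blast
    have "(\<lambda>k. integral {a..b} (\<lambda>x. \<psi> k x * g x)) \<longlonglongrightarrow> integral {a..b} ?gG"
    proof (rule dominated_convergence(2)[OF iG h])
      fix k x assume "x \<in> {a..b}"
      have "\<bar>S1 k x * S2 k x\<bar> \<le> 1" using S1_b[of k x] S2_b[of k x]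
        by (simp add: abs_mult mult_le_one)
      then have "\<bar>lf x * g x\<bar> * \<bar>S1 k x * S2 k x\<bar> \<le> \<bar>lf x * g x\<bar>"
        by (simp add: mult_left_le)
      then show "norm (\<psi> k x * g x) \<le> norm (lf x * g x)"
        by (simp add: \<psi>_def abs_mult mult_ac)
    next
      fix x assume "x \<in> {a..b}"
      show "(\<lambda>k. \<psi> k x * g x) \<longlonglongrightarrow> ?gG x"
      proof (rule tendsto_eventually)
        show "eventually (\<lambda>k. \<psi> k x * g x = ?gG x) sequentially"
          using S12_lim[of x]
        proof eventually_elim
          case (elim k)
          show ?case unfolding \<psi>_def elim by simp
        qed
      qed
    qed
    moreover have "integral {a..b} ?gG = integral {c..d} (\<lambda>x. lf x * g x)"
    proof -
      have "integral {a..b} ?gG = integral ({c<..<d} \<inter> {a..b}) (\<lambda>x. lf x * g x)"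
        by (rule integral_restrict_Int)
      also have "{c<..<d} \<inter> {a..b} = {c<..<d}" using ac db by auto
      finally show ?thesis by (simp add: integral_open_interval_real)
    qed
    ultimately show ?thesis by (simp add: G_def[abs_def])
  qed
  have wc: "continuous_on {a..b} (\<lambda>x. \<phi> x * lf x)" by (intro continuous_on_mult cont clf)
  have LB: "B \<longlonglongrightarrow> \<phi> c * lf c"
  proof -
    have "(\<lambda>k. integral {a..b} (\<lambda>x. \<phi> x * lf x * K1 k x)) \<longlonglongrightarrow> \<phi> c * lf c"
    proof (rule kernel_limit[where r = "\<lambda>k. 2 * \<epsilon> k", OF wc _ cK1 K1_nn intK1])
      show "c \<in> {a..b}" using ac cd db by simp
    next
      fix k x assume "K1 k x \<noteq> 0" "x \<in> {a..b}"
      then show "\<bar>x - c\<bar> < 2 * \<epsilon> k" using K1_supp[of k x] \<epsilon>pos[of k] by auto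
    next
      fix \<delta> :: real assume "\<delta> > 0"
      then have "\<delta> / 2 > 0" by simp
      from \<epsilon>lim[OF this] show "eventually (\<lambda>k. 2 * \<epsilon> k < \<delta>) sequentially"
        by eventually_elim simp
    qed
    then show ?thesis by (simp add: B_def[abs_def])
  qed
  have LC: "C \<longlonglongrightarrow> \<phi> d * lf d"
  proof -
    have "(\<lambda>k. integral {a..b} (\<lambda>x. \<phi> x * lf x * K2 k x)) \<longlonglongrightarrow> \<phi> d * lf d"
    proof (rule kernel_limit[where r = "\<lambda>k. 2 * \<epsilon> k", OF wc _ cK2 K2_nn intK2])
      show "d \<in> {a..b}" using ac cd db by simp
    next
      fix k x assume "K2 k x \<noteq> 0" "x \<in> {a..b}"
      then show "\<bar>x - d\<bar> < 2 * \<epsilon> k" using K2_supp[of k x] \<epsilon>pos[of k] by auto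
    next
      fix \<delta> :: real assume "\<delta> > 0"
      then have "\<delta> / 2 > 0" by simp
      from \<epsilon>lim[OF this] show "eventually (\<lambda>k. 2 * \<epsilon> k < \<delta>) sequentially"
        by eventually_elim simp
    qed
    then show ?thesis by (simp add: C_def[abs_def])
  qed
  have L1: "(\<lambda>k. \<beta> * A k + B k - C k) \<longlonglongrightarrow> \<beta> * integral {c..d} \<phi> + \<phi> c * lf c - \<phi> d * lf d"
    by (intro tendsto_intros LA LB LC)
  have L2: "(\<lambda>k. \<beta> * A k + B k - C k) \<longlonglongrightarrow> - integral {c..d} (\<lambda>x. lf x * g x)"
    unfolding ident by (intro tendsto_intros LG)
  have "\<beta> * integral {c..d} \<phi> + \<phi> c * lf c - \<phi> d * lf d = - integral {c..d} (\<lambda>x. lf x * g x)"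
    using LIMSEQ_unique[OF L1 L2] .
  moreover have "integral {c..d} (\<lambda>x. lf x * g x) = integral {c..d} (\<lambda>x. (\<alpha> + \<beta> * x) * g x)"
    by (simp add: lf_def)
  ultimately show ?thesis by (simp add: lf_def algebra_simps)
qed

lemma eventually_in_within: "eventually (\<lambda>s. s \<in> I) (at t within I)"
  by (simp add: eventually_at_filter)

lemma deriv_approx:
  fixes f :: "real \<Rightarrow> real"
  assumes f: "(f has_real_derivative D) (at t within I)" and \<delta>: "\<delta> > 0"
  shows "eventually (\<lambda>s. \<bar>f s - f t - D * (s - t)\<bar> \<le> \<delta> * \<bar>s - t\<bar>) (at t within I)"
proof -
  from f have "((\<lambda>s. (f s - f t) / (s - t)) \<longlongrightarrow> D) (at t within I)"
    by (simp add: has_field_derivative_iff)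
  then have "eventually (\<lambda>s. dist ((f s - f t) / (s - t)) D < \<delta>) (at t within I)"
    using \<delta> by (rule tendstoD)
  moreover have neq: "eventually (\<lambda>s. s \<noteq> t) (at t within I)" by (rule eventually_neq_at_within)
  ultimately show ?thesis
  proof eventually_elim
    case (elim s)
    then have st: "s - t \<noteq> 0" by simp
    have "f s - f t - D * (s - t) = ((f s - f t) / (s - t) - D) * (s - t)"
      using st by (simp add: field_simps)
    then have "\<bar>f s - f t - D * (s - t)\<bar> = \<bar>(f s - f t) / (s - t) - D\<bar> * \<bar>s - t\<bar>"
      by (simp add: abs_mult)
    also have "\<dots> \<le> \<delta> * \<bar>s - t\<bar>"
      using elim(1) by (intro mult_right_mono) (auto simp: dist_real_def)
    finally show ?case .
  qed
qed

lemma squeeze_deriv: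
  fixes x :: "real \<Rightarrow> real"
  assumes H: "\<And>\<epsilon>. \<epsilon> > 0 \<Longrightarrow> eventually (\<lambda>s. \<bar>x s - x t - L * (s - t)\<bar> \<le> \<epsilon> * \<bar>s - t\<bar>) (at t within I)"
  shows "(x has_real_derivative L) (at t within I)"
  unfolding has_field_derivative_iff
proof (rule tendstoI)
  fix e :: real assume e: "e > 0"
  then have "e / 2 > 0" by simp
  have neq: "eventually (\<lambda>s. s \<noteq> t) (at t within I)" by (rule eventually_neq_at_within)
  from H[OF \<open>e/2 > 0\<close>] neq show "eventually (\<lambda>s. dist ((x s - x t) / (s - t)) L < e) (at t within I)"
  proof eventually_elim
    case (elim s)
    then have st: "\<bar>s - t\<bar> > 0" by simp
    have "(x s - x t) / (s - t) - L = (x s - x t - L * (s - t)) / (s - t)"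
      using st by (simp add: field_simps)
    then have "\<bar>(x s - x t) / (s - t) - L\<bar> = \<bar>x s - x t - L * (s - t)\<bar> / \<bar>s - t\<bar>"
      by simp
    also have "\<dots> \<le> e / 2"
      using elim(1) st by (simp add: divide_le_eq)
    finally show ?case using e by (simp add: dist_real_def)
  qed
qed

lemma root_sign_mult:
  assumes "0 < N" "y * w > (0::real)"
  shows "root N y * w > 0"
proof (cases "y > 0")
  case True
  then have "w > 0" using assms(2) by (simp add: zero_less_mult_iff)
  then show ?thesis using True assms(1) by (simp add: real_root_gt_zero)
next
  case False
  then have "y < 0" "w < 0" using assms(2) by (auto simp: zero_less_mult_iff)
  then have "root N y < 0" using assms(1) by (simp add: real_root_lt_0_iff)
  then show ?thesis using \<open>w < 0\<close> by (simp add: mult_neg_neg)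
qed

lemma pos_of_mult: "(p::real) * w > 0 \<Longrightarrow> w > 0 \<Longrightarrow> p > 0"
  by (simp add: zero_less_mult_iff)

lemma neg_of_mult: "(p::real) * w > 0 \<Longrightarrow> w < 0 \<Longrightarrow> p < 0"
  by (simp add: zero_less_mult_iff)

lemma sign_to_deriv:
  fixes F :: "real \<Rightarrow> real \<Rightarrow> real" and x :: "real \<Rightarrow> real"
  assumes mono: "\<And>s z1 z2. s \<in> I \<Longrightarrow> z1 < z2 \<Longrightarrow> F z1 s < F z2 s"
    and eq: "\<And>s. s \<in> I \<Longrightarrow> F (x s) s = 0"
    and sgn: "\<And>e. e \<noteq> 0 \<Longrightarrow>
       eventually (\<lambda>s. s \<noteq> t \<longrightarrow> F (x t + (L + e) * (s - t)) s * (e * (s - t)) > 0) (at t within I)"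
  shows "(x has_real_derivative L) (at t within I)"
proof (rule squeeze_deriv)
  fix \<epsilon> :: real assume \<epsilon>: "\<epsilon> > 0"
  have lt: "x s < z" if s: "s \<in> I" and F: "F z s > 0" for s z
  proof (rule ccontr)
    assume "\<not> x s < z"
    then have "F z s \<le> F (x s) s" using mono[OF s, of z "x s"] by (cases "z = x s") auto
    then show False using eq[OF s] F by simp
  qed
  have gt: "z < x s" if s: "s \<in> I" and F: "F z s < 0" for s z
  proof (rule ccontr)
    assume "\<not> z < x s"
    then have "F (x s) s \<le> F z s" using mono[OF s, of "x s" z] by (cases "z = x s") auto
    then show False using eq[OF s] F by simp
  qed
  have e1: "\<epsilon> \<noteq> 0" "- \<epsilon> \<noteq> 0" using \<epsilon> by auto
  from sgn[OF e1(1)] sgn[OF e1(2)] eventually_in_within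
  show "eventually (\<lambda>s. \<bar>x s - x t - L * (s - t)\<bar> \<le> \<epsilon> * \<bar>s - t\<bar>) (at t within I)"
  proof eventually_elim
    case (elim s)
    show ?case
    proof (cases "s = t")
      case True then show ?thesis by simp
    next
      case False
      have p1: "F (x t + (L + \<epsilon>) * (s - t)) s * (\<epsilon> * (s - t)) > 0" using elim False by simp
      have p2: "F (x t + (L + - \<epsilon>) * (s - t)) s * (- \<epsilon> * (s - t)) > 0" using elim False by simp
      have a1: "(L + \<epsilon>) * (s - t) = L * (s - t) + \<epsilon> * (s - t)" by (simp add: algebra_simps)
      have a2: "(L + - \<epsilon>) * (s - t) = L * (s - t) - \<epsilon> * (s - t)" by (simp add: algebra_simps)
      consider "s > t" | "s < t" using False by linarith
      then show ?thesis
      proof cases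
        case 1
        then have w: "\<epsilon> * (s - t) > 0" using \<epsilon> by simp
        from p1 w have "F (x t + (L + \<epsilon>) * (s - t)) s > 0" by (rule pos_of_mult)
        then have u: "x s < x t + (L + \<epsilon>) * (s - t)" by (rule lt[OF elim(3)])
        have w2: "- \<epsilon> * (s - t) < 0" using w by simp
        from p2 w2 have "F (x t + (L + - \<epsilon>) * (s - t)) s < 0" by (rule neg_of_mult)
        then have l: "x t + (L + - \<epsilon>) * (s - t) < x s" by (rule gt[OF elim(3)])
        have ee: "\<epsilon> * \<bar>s - t\<bar> = \<epsilon> * (s - t)" using 1 by simp
        have u': "x s < x t + L * (s - t) + \<epsilon> * (s - t)" using u a1 by simp
        have l': "x t + L * (s - t) - \<epsilon> * (s - t) < x s" using l a2 by simp
        show ?thesis unfolding abs_le_iff ee using u' l' by linarith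
      next
        case 2
        then have w: "\<epsilon> * (s - t) < 0" using \<epsilon> by (simp add: mult_pos_neg)
        from p1 w have "F (x t + (L + \<epsilon>) * (s - t)) s < 0" by (rule neg_of_mult)
        then have l: "x t + (L + \<epsilon>) * (s - t) < x s" by (rule gt[OF elim(3)])
        have w2: "- \<epsilon> * (s - t) > 0" using w by simp
        from p2 w2 have "F (x t + (L + - \<epsilon>) * (s - t)) s > 0" by (rule pos_of_mult)
        then have u: "x s < x t + (L + - \<epsilon>) * (s - t)" by (rule lt[OF elim(3)])
        have ee: "\<epsilon> * \<bar>s - t\<bar> = - (\<epsilon> * (s - t))" using 2 by (simp add: algebra_simps)
        have u': "x s < x t + L * (s - t) - \<epsilon> * (s - t)" using u a2 by simp
        have l': "x t + L * (s - t) + \<epsilon> * (s - t) < x s" using l a1 by simp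
        show ?thesis unfolding abs_le_iff ee using u' l' by linarith
      qed
    qed
  qed
qed

lemma arith_pos:
  fixes u a w :: real
  assumes "\<bar>u - a * w\<bar> \<le> (a / 2) * \<bar>w\<bar>" "a > 0" "w \<noteq> 0"
  shows "u * w > 0"
proof -
  have 0: "\<bar>(u - a * w) * w\<bar> \<le> ((a / 2) * \<bar>w\<bar>) * \<bar>w\<bar>"
    unfolding abs_mult by (rule mult_right_mono[OF assms(1)]) simp
  have sq: "((a / 2) * \<bar>w\<bar>) * \<bar>w\<bar> = (a / 2) * (w * w)"
    by (metis abs_mult_self_eq mult.assoc)
  have 1: "\<bar>(u - a * w) * w\<bar> \<le> (a / 2) * (w * w)" using 0 sq by simp
  have 2: "(u - a * w) * w = u * w - a * (w * w)" by (simp add: algebra_simps)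
  have "w * w > 0" using assms(3) by (cases "w > 0") (auto simp: mult_neg_neg)
  then have 3: "a * (w * w) > 0" using assms(2) by simp
  have 4: "- ((u - a * w) * w) \<le> (a / 2) * (w * w)" by (rule abs_le_D2[OF 1])
  have 5: "(a / 2) * (w * w) = (a * (w * w)) / 2" by simp
  show ?thesis using 4 5 2 3 by linarith
qed

lemma root_beats_linear:
  fixes H C :: real
  assumes N: "N \<ge> 2" and H: "H > 0" and C: "C \<ge> 0"
  shows "\<exists>\<eta>>0. \<forall>v. 0 < v \<and> v < \<eta> \<longrightarrow> C * v < H * root N v"
proof -
  define \<zeta> where "\<zeta> = min 1 (H / (C + 1))"
  have \<zeta>: "\<zeta> > 0" "\<zeta> \<le> 1" "\<zeta> \<le> H / (C + 1)" using H C by (auto simp: \<zeta>_def)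
  show ?thesis
  proof (intro exI[of _ "\<zeta> ^ N"] conjI allI impI)
    show "\<zeta> ^ N > 0" using \<zeta> by simp
    fix v assume v: "0 < v \<and> v < \<zeta> ^ N"
    define z where "z = root N v"
    have N0: "0 < N" using N by simp
    have z0: "z > 0" using v N0 by (simp add: z_def real_root_gt_zero)
    have "z < root N (\<zeta> ^ N)" unfolding z_def using v N0 by simp
    also have "root N (\<zeta> ^ N) = \<zeta>" using \<zeta> N0 by (simp add: real_root_power_cancel)
    finally have z\<zeta>: "z < \<zeta>" .
    have vz: "v = z ^ N" using v N0 by (simp add: z_def)
    have "z ^ N = z * z ^ (N - 1)" using N0 by (simp add: power_eq_if)
    have "z ^ (N - 1) \<le> z ^ 1"
      using z0 z\<zeta> \<zeta> N by (intro power_decreasing) auto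
    then have zN1: "z ^ (N - 1) \<le> z" by simp
    have "C * z ^ (N - 1) \<le> (C + 1) * z ^ (N - 1)" using z0 by simp
    also have "\<dots> \<le> (C + 1) * z" using zN1 C by (intro mult_left_mono) auto
    also have "\<dots> < (C + 1) * \<zeta>" using z\<zeta> C by simp
    also have "\<dots> \<le> H" using \<zeta>(3) C by (simp add: le_divide_eq mult.commute)
    finally have "C * z ^ (N - 1) < H" .
    then have "C * z ^ (N - 1) * z < H * z" using z0 by simp
    moreover have "C * v = C * z ^ (N - 1) * z"
      using vz \<open>z ^ N = z * z ^ (N - 1)\<close> by (simp add: mult_ac)
    ultimately have "C * v < H * z" by linarith
    then show "C * v < H * root N v" by (simp only: z_def)
  qed
qed

lemma implicit_ND:
  fixes h T :: "nat \<Rightarrow> real \<Rightarrow> real" and x :: "real \<Rightarrow> real" and h' T' dr :: "nat \<Rightarrow> real"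
  assumes t: "t \<in> I"
    and hd: "\<And>i. i \<le> n \<Longrightarrow> (h i has_real_derivative h' i) (at t within I)"
    and Td: "\<And>i. i \<le> n \<Longrightarrow> (T i has_real_derivative T' i) (at t within I)"
    and eq: "\<And>s. s \<in> I \<Longrightarrow> (\<Sum>i\<le>n. h i s * root N (x s + T i s)) = 0"
    and hpos: "\<And>s i. s \<in> I \<Longrightarrow> i \<le> n \<Longrightarrow> h i s > 0"
    and dr: "\<And>i. i \<le> n \<Longrightarrow> DERIV (root N) (x t + T i t) :> dr i"
    and drpos: "\<And>i. i \<le> n \<Longrightarrow> dr i > 0"
  shows "\<exists>L. \<forall>e. e \<noteq> 0 \<longrightarrow> eventually (\<lambda>s. s \<noteq> t \<longrightarrow>
      (\<Sum>i\<le>n. h i s * root N (x t + (L + e) * (s - t) + T i s)) * (e * (s - t)) > 0) (at t within I)"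
proof -
  define S where "S = (\<Sum>i\<le>n. h i t * dr i)"
  have S: "S > 0" unfolding S_def
    by (rule sum_pos) (auto intro!: mult_pos_pos hpos[OF t] drpos)
  define M where "M = (\<Sum>i\<le>n. h' i * root N (x t + T i t) + dr i * T' i * h i t)"
  define L where "L = - M / S"
  show ?thesis
  proof (intro exI[of _ L] allI impI)
    fix e :: real assume e: "e \<noteq> 0"
    define G where "G = (\<lambda>s. \<Sum>i\<le>n. h i s * root N (x t + (L + e) * (s - t) + T i s))"
    have dG: "(G has_real_derivative
        (\<Sum>i\<le>n. h' i * root N (x t + T i t) + dr i * ((L + e) + T' i) * h i t)) (at t within I)"
      unfolding G_def
    proof (rule DERIV_sum)
      fix i assume "i \<in> {..n}"
      then have i: "i \<le> n" by simp
      have inner: "((\<lambda>s. x t + (L + e) * (s - t) + T i s) has_real_derivative (L + e) + T' i) (at t within I)"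
        using Td[OF i] by (auto intro!: derivative_eq_intros)
      have r: "DERIV (root N) (x t + (L + e) * (t - t) + T i t) :> dr i" using dr[OF i] by simp
      have "((\<lambda>s. h i s * root N (x t + (L + e) * (s - t) + T i s)) has_real_derivative
          h' i * root N (x t + (L + e) * (t - t) + T i t) + dr i * ((L + e) + T' i) * h i t) (at t within I)"
        by (rule DERIV_mult[OF hd[OF i] DERIV_chain2[OF r inner]])
      then show "((\<lambda>s. h i s * root N (x t + (L + e) * (s - t) + T i s)) has_real_derivative
          h' i * root N (x t + T i t) + dr i * ((L + e) + T' i) * h i t) (at t within I)" by simp
    qed
    have val: "(\<Sum>i\<le>n. h' i * root N (x t + T i t) + dr i * ((L + e) + T' i) * h i t) = e * S"
    proof -
      have "(\<Sum>i\<le>n. h' i * root N (x t + T i t) + dr i * ((L + e) + T' i) * h i t)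
          = (\<Sum>i\<le>n. (h' i * root N (x t + T i t) + dr i * T' i * h i t) + (L + e) * (h i t * dr i))"
        by (rule sum.cong) (simp_all add: algebra_simps)
      also have "\<dots> = M + (L + e) * S"
        by (simp add: sum.distrib sum_distrib_left M_def S_def)
      also have "\<dots> = e * S" using S by (simp add: L_def field_simps)
      finally show ?thesis .
    qed
    have G0: "G t = 0" using eq[OF t] by (simp add: G_def)
    have pos: "\<bar>e\<bar> * S / 2 > 0" using e S by simp
    from deriv_approx[OF dG[unfolded val] pos]
    show "eventually (\<lambda>s. s \<noteq> t \<longrightarrow>
      (\<Sum>i\<le>n. h i s * root N (x t + (L + e) * (s - t) + T i s)) * (e * (s - t)) > 0) (at t within I)"
    proof eventually_elim
      case (elim s)
      show ?case
      proof
        assume st: "s \<noteq> t"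
        have w: "e * (s - t) \<noteq> 0" using st e by simp
        have a1: "e * S * (s - t) = S * (e * (s - t))" by (simp add: mult_ac)
        have a2: "\<bar>e\<bar> * S / 2 * \<bar>s - t\<bar> = S / 2 * \<bar>e * (s - t)\<bar>" by (simp add: abs_mult mult_ac)
        from elim have "\<bar>G s - 0 - e * S * (s - t)\<bar> \<le> \<bar>e\<bar> * S / 2 * \<bar>s - t\<bar>"
          by (simp only: G0)
        then have "\<bar>G s - S * (e * (s - t))\<bar> \<le> S / 2 * \<bar>e * (s - t)\<bar>"
          by (simp only: a1 a2 diff_zero)
        then have "G s * (e * (s - t)) > 0" by (rule arith_pos[OF _ S w])
        then show "(\<Sum>i\<le>n. h i s * root N (x t + (L + e) * (s - t) + T i s)) * (e * (s - t)) > 0"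
          by (simp add: G_def)
      qed
    qed
  qed
qed

lemma implicit_D:
  fixes h T :: "nat \<Rightarrow> real \<Rightarrow> real" and x :: "real \<Rightarrow> real" and h' T' :: "nat \<Rightarrow> real"
  assumes t: "t \<in> I"
    and hd: "\<And>i. i \<le> n \<Longrightarrow> (h i has_real_derivative h' i) (at t within I)"
    and Td: "\<And>i. i \<le> n \<Longrightarrow> (T i has_real_derivative T' i) (at t within I)"
    and eq: "\<And>s. s \<in> I \<Longrightarrow> (\<Sum>i\<le>n. h i s * root N (x s + T i s)) = 0"
    and hpos: "\<And>s i. s \<in> I \<Longrightarrow> i \<le> n \<Longrightarrow> h i s > 0"
    and N2: "N \<ge> 2" and oddN: "odd N"
    and k: "k \<le> n" "x t + T k t = 0"
    and degen: "\<And>i. i \<le> n \<Longrightarrow> x t + T i t = 0 \<Longrightarrow> T' i = \<gamma>"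
  shows "\<forall>e. e \<noteq> 0 \<longrightarrow> eventually (\<lambda>s. s \<noteq> t \<longrightarrow>
      (\<Sum>i\<le>n. h i s * root N (x t + (- \<gamma> + e) * (s - t) + T i s)) * (e * (s - t)) > 0) (at t within I)"
proof (intro allI impI)
  fix e :: real assume e: "e \<noteq> 0"
  have N0: "0 < N" using N2 by simp
  define y where "y = (\<lambda>i s. x t + (- \<gamma> + e) * (s - t) + T i s)"
  define K where "K = {i. i \<le> n \<and> x t + T i t = 0}"
  have Kfin: "finite K" unfolding K_def by simp
  have Ksub: "K \<subseteq> {..n}" unfolding K_def by auto
  have kK: "k \<in> K" using k unfolding K_def by simp
  have dyK: "(y i has_real_derivative e) (at t within I)" if i: "i \<in> K" for i
  proof -
    have "((\<lambda>s. x t + (- \<gamma> + e) * (s - t) + T i s) has_real_derivative (- \<gamma> + e) + T' i) (at t within I)"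
      using Td[of i] i by (auto simp: K_def intro!: derivative_eq_intros)
    moreover have "T' i = \<gamma>" using i degen by (simp add: K_def)
    ultimately show ?thesis by (simp add: y_def)
  qed
  have y0: "y i t = 0" if "i \<in> K" for i using that by (simp add: y_def K_def)
  have he: "\<bar>e\<bar> / 2 > 0" using e by simp
  have evK: "eventually (\<lambda>s. \<forall>i\<in>K. \<bar>y i s - e * (s - t)\<bar> \<le> \<bar>e\<bar> / 2 * \<bar>s - t\<bar>) (at t within I)"
  proof (rule eventually_ball_finite[OF Kfin], intro ballI)
    fix i assume i: "i \<in> K"
    from deriv_approx[OF dyK[OF i] he]
    show "eventually (\<lambda>s. \<bar>y i s - e * (s - t)\<bar> \<le> \<bar>e\<bar> / 2 * \<bar>s - t\<bar>) (at t within I)"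
      by eventually_elim (simp add: y0[OF i])
  qed
  define dr where "dr = (\<lambda>i. inverse (real N * root N (x t + T i t) ^ (N - Suc 0)))"
  have drD: "DERIV (root N) (x t + T i t) :> dr i" if "i \<le> n" "i \<notin> K" for i
    by (rule DERIV_real_root_generic) (use N0 that oddN in \<open>auto simp: K_def dr_def\<close>)
  define R where "R = (\<lambda>s. \<Sum>i\<in>{..n} - K. h i s * root N (y i s))"
  define R' where "R' = (\<Sum>i\<in>{..n} - K. h' i * root N (x t + T i t) + dr i * ((- \<gamma> + e) + T' i) * h i t)"
  have dR: "(R has_real_derivative R') (at t within I)"
    unfolding R_def R'_def
  proof (rule DERIV_sum)
    fix i assume "i \<in> {..n} - K"
    then have i: "i \<le> n" "i \<notin> K" by auto
    have inner: "((\<lambda>s. x t + (- \<gamma> + e) * (s - t) + T i s) has_real_derivative (- \<gamma> + e) + T' i) (at t within I)"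
      using Td[OF i(1)] by (auto intro!: derivative_eq_intros)
    have r: "DERIV (root N) (x t + (- \<gamma> + e) * (t - t) + T i t) :> dr i" using drD[OF i] by simp
    have "((\<lambda>s. h i s * root N (x t + (- \<gamma> + e) * (s - t) + T i s)) has_real_derivative
        h' i * root N (x t + (- \<gamma> + e) * (t - t) + T i t) + dr i * ((- \<gamma> + e) + T' i) * h i t) (at t within I)"
      by (rule DERIV_mult[OF hd[OF i(1)] DERIV_chain2[OF r inner]])
    then show "((\<lambda>s. h i s * root N (y i s)) has_real_derivative
        h' i * root N (x t + T i t) + dr i * ((- \<gamma> + e) + T' i) * h i t) (at t within I)"
      by (simp add: y_def)
  qed
  have split: "(\<Sum>i\<le>n. f i) = (\<Sum>i\<in>{..n} - K. f i) + (\<Sum>i\<in>K. f i)" for f :: "nat \<Rightarrow> real"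
    by (rule sum.subset_diff[OF Ksub]) simp
  have R0: "R t = 0"
  proof -
    have "(\<Sum>i\<in>K. h i t * root N (x t + T i t)) = 0" by (rule sum.neutral) (simp add: K_def)
    moreover have "R t = (\<Sum>i\<in>{..n} - K. h i t * root N (x t + T i t))" by (simp add: R_def y_def)
    ultimately show ?thesis using eq[OF t] split[of "\<lambda>i. h i t * root N (x t + T i t)"] by simp
  qed
  have one: "(1::real) > 0" by simp
  have evR: "eventually (\<lambda>s. \<bar>R s\<bar> \<le> (\<bar>R'\<bar> + 1) * \<bar>s - t\<bar>) (at t within I)"
    using deriv_approx[OF dR one]
  proof eventually_elim
    case (elim s)
    have "\<bar>R' * (s - t)\<bar> = \<bar>R'\<bar> * \<bar>s - t\<bar>" by (simp add: abs_mult)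
    then show ?case using elim R0 by (simp add: algebra_simps abs_le_iff) linarith
  qed
  define H where "H = h k t / 2"
  have H: "H > 0" using hpos[OF t k(1)] by (simp add: H_def)
  have evH: "eventually (\<lambda>s. h k s > H) (at t within I)"
  proof -
    have "(h k \<longlongrightarrow> h k t) (at t within I)"
      using DERIV_continuous[OF hd[OF k(1)]] by (simp add: continuous_within)
    then show ?thesis by (rule order_tendstoD(1)) (use H in \<open>simp add: H_def\<close>)
  qed
  define C where "C = 2 * (\<bar>R'\<bar> + 1) / \<bar>e\<bar>"
  have C: "C \<ge> 0" by (simp add: C_def)
  obtain \<eta> where \<eta>: "\<eta> > 0" "\<And>v. 0 < v \<and> v < \<eta> \<Longrightarrow> C * v < H * root N v"
    using root_beats_linear[OF N2 H C] by blast
  have \<eta>e: "2 * \<eta> / \<bar>e\<bar> > 0" using \<eta> e by simp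
  have ev\<eta>: "eventually (\<lambda>s. dist s t < 2 * \<eta> / \<bar>e\<bar>) (at t within I)"
    by (rule tendstoD[OF tendsto_ident_at \<eta>e])
  from evK evR evH ev\<eta> eventually_in_within[of I t]
  show "eventually (\<lambda>s. s \<noteq> t \<longrightarrow>
      (\<Sum>i\<le>n. h i s * root N (x t + (- \<gamma> + e) * (s - t) + T i s)) * (e * (s - t)) > 0) (at t within I)"
  proof eventually_elim
    case (elim s)
    show ?case
    proof
      assume st: "s \<noteq> t"
      define w where "w = e * (s - t)"
      have w0: "w \<noteq> 0" using st e by (simp add: w_def)
      have aw: "\<bar>w\<bar> = \<bar>e\<bar> * \<bar>s - t\<bar>" by (simp add: w_def abs_mult)
      have sI: "s \<in> I" using elim by simp
      have yK: "\<bar>y i s - 1 * w\<bar> \<le> (1 / 2) * \<bar>w\<bar>" if i: "i \<in> K" for i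
        using elim(1) i aw by (simp add: w_def)
      have ywpos: "y i s * w > 0" if i: "i \<in> K" for i
        by (rule arith_pos[OF yK[OF i]]) (use w0 in auto)
      have termK: "h i s * root N (y i s) * w \<ge> 0" if i: "i \<in> K" for i
      proof -
        have "root N (y i s) * w > 0" by (rule root_sign_mult[OF N0 ywpos[OF i]])
        moreover have "h i s > 0" using hpos[OF sI] i Ksub by auto
        ultimately show ?thesis by (simp add: mult.assoc)
      qed
      have absyk: "\<bar>y k s\<bar> \<ge> \<bar>w\<bar> / 2"
      proof -
        have t1: "\<bar>w\<bar> - \<bar>y k s\<bar> \<le> \<bar>y k s - w\<bar>"
          using abs_triangle_ineq2[of w "y k s"] by (simp add: abs_minus_commute)
        have t2: "\<bar>y k s - w\<bar> \<le> \<bar>w\<bar> / 2" using yK[OF kK] by simp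
        show ?thesis using t1 t2 by linarith
      qed
      have rk: "root N (\<bar>w\<bar> / 2) \<le> \<bar>root N (y k s)\<bar>"
        using absyk N0 by (simp add: real_root_abs[symmetric])
      have prodk: "root N (y k s) * w = \<bar>root N (y k s)\<bar> * \<bar>w\<bar>"
        using root_sign_mult[OF N0 ywpos[OF kK]] by (simp add: abs_mult[symmetric])
      have hk: "h k s > H" using elim by simp
      have termk: "h k s * root N (y k s) * w \<ge> H * root N (\<bar>w\<bar> / 2) * \<bar>w\<bar>"
      proof -
        have "H * root N (\<bar>w\<bar> / 2) \<le> h k s * \<bar>root N (y k s)\<bar>"
          using hk rk H N0 by (intro mult_mono) auto
        then have "H * root N (\<bar>w\<bar> / 2) * \<bar>w\<bar> \<le> h k s * \<bar>root N (y k s)\<bar> * \<bar>w\<bar>"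
          by (rule mult_right_mono) simp
        also have "\<dots> = h k s * root N (y k s) * w" using prodk by (simp add: mult.assoc)
        finally show ?thesis .
      qed
      have sumK: "(\<Sum>i\<in>K. h i s * root N (y i s) * w) \<ge> H * root N (\<bar>w\<bar> / 2) * \<bar>w\<bar>"
      proof -
        have "h k s * root N (y k s) * w \<le> (\<Sum>i\<in>K. h i s * root N (y i s) * w)"
          by (rule member_le_sum[OF kK _ Kfin]) (use termK in auto)
        then show ?thesis using termk by linarith
      qed
      have Rb: "\<bar>R s\<bar> \<le> (\<bar>R'\<bar> + 1) * \<bar>s - t\<bar>" using elim by simp
      have Cw: "(\<bar>R'\<bar> + 1) * \<bar>s - t\<bar> = C * (\<bar>w\<bar> / 2)" using e by (simp add: C_def aw field_simps)
      have Rw: "R s * w \<ge> - (C * (\<bar>w\<bar> / 2)) * \<bar>w\<bar>"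
      proof -
        have "\<bar>R s * w\<bar> \<le> (C * (\<bar>w\<bar> / 2)) * \<bar>w\<bar>"
          unfolding abs_mult using Rb Cw by (intro mult_right_mono) auto
        then show ?thesis by (simp add: abs_le_iff)
      qed
      have v: "0 < \<bar>w\<bar> / 2 \<and> \<bar>w\<bar> / 2 < \<eta>"
      proof
        show "0 < \<bar>w\<bar> / 2" using w0 by simp
        have "\<bar>s - t\<bar> < 2 * \<eta> / \<bar>e\<bar>" using elim by (simp add: dist_real_def)
        then have "\<bar>e\<bar> * \<bar>s - t\<bar> < 2 * \<eta>" using e by (simp add: field_simps)
        then show "\<bar>w\<bar> / 2 < \<eta>" using aw by simp
      qed
      have key: "C * (\<bar>w\<bar> / 2) < H * root N (\<bar>w\<bar> / 2)" by (rule \<eta>(2)[OF v])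
      then have key2: "C * (\<bar>w\<bar> / 2) * \<bar>w\<bar> < H * root N (\<bar>w\<bar> / 2) * \<bar>w\<bar>"
        using w0 by (intro mult_strict_right_mono) auto
      have "(\<Sum>i\<le>n. h i s * root N (x t + (- \<gamma> + e) * (s - t) + T i s)) * (e * (s - t))
          = (\<Sum>i\<le>n. h i s * root N (y i s)) * w" by (simp add: y_def w_def)
      also have "\<dots> = R s * w + (\<Sum>i\<in>K. h i s * root N (y i s) * w)"
        by (simp add: split[of "\<lambda>i. h i s * root N (y i s)"] R_def distrib_right sum_distrib_right)
      finally have tot: "(\<Sum>i\<le>n. h i s * root N (x t + (- \<gamma> + e) * (s - t) + T i s)) * (e * (s - t))
          = R s * w + (\<Sum>i\<in>K. h i s * root N (y i s) * w)" .
      show "(\<Sum>i\<le>n. h i s * root N (x t + (- \<gamma> + e) * (s - t) + T i s)) * (e * (s - t)) > 0"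
      proof -
        have m: "- (C * (\<bar>w\<bar> / 2)) * \<bar>w\<bar> = - (C * (\<bar>w\<bar> / 2) * \<bar>w\<bar>)" by simp
        show ?thesis unfolding tot using Rw sumK key2 m by linarith
      qed
    qed
  qed
qed

lemma implicit_deriv:
  fixes h T :: "nat \<Rightarrow> real \<Rightarrow> real" and x :: "real \<Rightarrow> real" and h' T' :: "nat \<Rightarrow> real"
  assumes t: "t \<in> I"
    and hd: "\<And>i. i \<le> n \<Longrightarrow> (h i has_real_derivative h' i) (at t within I)"
    and Td: "\<And>i. i \<le> n \<Longrightarrow> (T i has_real_derivative T' i) (at t within I)"
    and eq: "\<And>s. s \<in> I \<Longrightarrow> (\<Sum>i\<le>n. h i s * root N (x s + T i s)) = 0"
    and hpos: "\<And>s i. s \<in> I \<Longrightarrow> i \<le> n \<Longrightarrow> h i s > 0"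
    and N1: "N \<ge> 1" and oddN: "odd N"
    and degen: "\<And>i. i \<le> n \<Longrightarrow> x t + T i t = 0 \<Longrightarrow> T' i = \<gamma>"
  shows "\<exists>D. (x has_real_derivative D) (at t within I)"
proof -
  have N0: "0 < N" using N1 by simp
  define F where "F = (\<lambda>z s. \<Sum>i\<le>n. h i s * root N (z + T i s))"
  have mono: "F z1 s < F z2 s" if "s \<in> I" "z1 < z2" for s z1 z2
    unfolding F_def
    by (rule sum_strict_mono) (use that N0 hpos in \<open>auto intro!: mult_strict_left_mono real_root_less_mono\<close>)
  have eqF: "F (x s) s = 0" if "s \<in> I" for s using eq[OF that] by (simp add: F_def)
  show ?thesis
  proof (cases "N = 1 \<or> (\<forall>i\<le>n. x t + T i t \<noteq> 0)")
    case True
    define dr where "dr = (\<lambda>i. if N = 1 then 1 else inverse (real N * root N (x t + T i t) ^ (N - Suc 0)))"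
    have dr: "DERIV (root N) (x t + T i t) :> dr i" if i: "i \<le> n" for i
    proof (cases "N = 1")
      case True
      have "root N = (\<lambda>x. x)" by (rule ext) (simp add: True)
      then show ?thesis by (simp add: dr_def True)
    next
      case False
      then have ne: "x t + T i t \<noteq> 0" using \<open>N = 1 \<or> _\<close> i by auto
      show ?thesis by (rule DERIV_real_root_generic) (use N0 ne oddN False in \<open>auto simp: dr_def\<close>)
    qed
    have drpos: "dr i > 0" if i: "i \<le> n" for i
    proof (cases "N = 1")
      case True then show ?thesis by (simp add: dr_def)
    next
      case False
      then have ne: "x t + T i t \<noteq> 0" using \<open>N = 1 \<or> _\<close> i by auto
      then have rne: "root N (x t + T i t) \<noteq> 0" using N0 by simp
      have ev: "even (N - Suc 0)" using oddN N0 by simp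
      have "root N (x t + T i t) ^ (N - Suc 0) > 0" using rne ev by (simp add: zero_less_power_eq)
      then show ?thesis using False N0 by (simp add: dr_def)
    qed
    obtain L where L: "\<forall>e. e \<noteq> 0 \<longrightarrow> eventually (\<lambda>s. s \<noteq> t \<longrightarrow>
        (\<Sum>i\<le>n. h i s * root N (x t + (L + e) * (s - t) + T i s)) * (e * (s - t)) > 0) (at t within I)"
      using implicit_ND[OF t hd Td eq hpos dr drpos] by blast
    have "(x has_real_derivative L) (at t within I)"
      by (rule sign_to_deriv[where F=F and x=x and I=I and t=t, OF mono eqF]) (use L in \<open>simp add: F_def\<close>)+
    then show ?thesis by blast
  next
    case False
    then have N2: "N \<ge> 2" using N1 by simp
    from False obtain k where k: "k \<le> n" "x t + T k t = 0" by auto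
    have L: "\<forall>e. e \<noteq> 0 \<longrightarrow> eventually (\<lambda>s. s \<noteq> t \<longrightarrow>
        (\<Sum>i\<le>n. h i s * root N (x t + (- \<gamma> + e) * (s - t) + T i s)) * (e * (s - t)) > 0) (at t within I)"
      by (rule implicit_D[OF t hd Td eq hpos N2 oddN k degen])
    have "(x has_real_derivative - \<gamma>) (at t within I)"
      by (rule sign_to_deriv[where F=F and x=x and I=I and t=t, OF mono eqF]) (use L in \<open>simp add: F_def\<close>)+
    then show ?thesis by blast
  qed
qed

lemma chain_le:
  fixes q :: "nat \<Rightarrow> real"
  assumes "\<forall>i\<le>n. q i < q (Suc i)" "i \<le> j" "j \<le> Suc n"
  shows "q i \<le> q j"
  using assms(2,3)
proof (induction j)
  case 0 then show ?case by simp
next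
  case (Suc j)
  show ?case
  proof (cases "i = Suc j")
    case True then show ?thesis by simp
  next
    case False
    then have "i \<le> j" "j \<le> Suc n" "j \<le> n" using Suc.prems by auto
    then show ?thesis using Suc.IH assms(1) by (meson less_imp_le order_trans)
  qed
qed

lemma piecewise_has_integral:
  fixes q :: "nat \<Rightarrow> real" and f :: "real \<Rightarrow> real" and y :: "nat \<Rightarrow> real"
  assumes mono: "\<forall>i\<le>n. q i < q (Suc i)"
    and pieces: "\<And>i. i \<le> n \<Longrightarrow> (f has_integral y i) {q i..q (Suc i)}"
  shows "(f has_integral (\<Sum>i\<le>n. y i)) {q 0..q (Suc n)}"
  using mono pieces
proof (induction n)
  case 0 then show ?case by simp
next
  case (Suc n)
  have IH: "(f has_integral (\<Sum>i\<le>n. y i)) {q 0..q (Suc n)}"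
    using Suc.prems by (intro Suc.IH) auto
  have "q 0 \<le> q (Suc n)" using chain_le[OF Suc.prems(1), of 0 "Suc n"] by simp
  moreover have "q (Suc n) \<le> q (Suc (Suc n))" using Suc.prems(1) by (simp add: less_imp_le)
  moreover have last: "(f has_integral y (Suc n)) {q (Suc n)..q (Suc (Suc n))}"
    using Suc.prems(2)[of "Suc n"] by simp
  ultimately have "(f has_integral (\<Sum>i\<le>n. y i) + y (Suc n)) {q 0..q (Suc (Suc n))}"
    using has_integral_combine IH by blast
  then show ?case by simp
qed

lemma sum_by_parts:
  fixes A B :: "nat \<Rightarrow> real"
  shows "(\<Sum>i\<le>n. A i * (B (Suc i) - B i))
       = A n * B (Suc n) - A 0 * B 0 - (\<Sum>i\<in>{1..n}. (A i - A (i - 1)) * B i)"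
proof (induction n)
  case 0 then show ?case by (simp add: algebra_simps)
next
  case (Suc n)
  have "(\<Sum>i\<in>{1..Suc n}. (A i - A (i - 1)) * B i) = (\<Sum>i\<in>{1..n}. (A i - A (i - 1)) * B i) + (A (Suc n) - A n) * B (Suc n)"
    by simp
  then show ?case using Suc by (simp add: algebra_simps)
qed

lemma telescope_up:
  fixes f :: "nat \<Rightarrow> real"
  assumes "i \<le> n"
  shows "(\<Sum>j\<in>{Suc i..n}. f j - f (j - 1)) = f n - f i"
  using assms
proof (induction n)
  case 0 then show ?case by simp
next
  case (Suc n)
  show ?case
  proof (cases "i = Suc n")
    case True then show ?thesis by simp
  next
    case False
    then have "i \<le> n" using Suc.prems by simp
    then have "(\<Sum>j\<in>{Suc i..Suc n}. f j - f (j - 1)) = (\<Sum>j\<in>{Suc i..n}. f j - f (j - 1)) + (f (Suc n) - f n)"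
      by simp
    then show ?thesis using Suc.IH[OF \<open>i \<le> n\<close>] by simp
  qed
qed

lemma telescope_atMost:
  fixes f :: "nat \<Rightarrow> real"
  shows "(\<Sum>i\<le>n. f (Suc i) - f i) = f (Suc n) - f 0"
  by (induction n) auto

lemma root_m:
  fixes v :: real
  assumes "0 < N"
  shows "root N (\<bar>v\<bar> ^ (N - 1) * v) = v"
proof (cases "v \<ge> 0")
  case True
  then have "\<bar>v\<bar> ^ (N - 1) * v = v ^ N" using assms by (simp add: power_eq_if)
  then show ?thesis using True assms by (simp add: real_root_power_cancel)
next
  case False
  then have "\<bar>v\<bar> ^ (N - 1) * v = - (\<bar>v\<bar> ^ N)" using assms by (simp add: power_eq_if)
  then show ?thesis using False assms by (simp add: real_root_minus real_root_power_cancel)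
qed

lemma m_times_v:
  fixes v :: real
  assumes "2 \<le> r"
  shows "\<bar>v\<bar> ^ (r - 2) * v * v = \<bar>v\<bar> ^ r"
proof -
  have "\<bar>v\<bar> ^ (r - 2) * v * v = \<bar>v\<bar> ^ (r - 2) * \<bar>v\<bar> ^ 2"
    by (simp add: power2_eq_square abs_mult_self_eq mult.assoc)
  also have "\<dots> = \<bar>v\<bar> ^ (r - 2 + 2)" by (simp only: power_add)
  also have "r - 2 + 2 = r" using assms by simp
  finally show ?thesis .
qed

lemma piece_deriv:
  fixes q w :: "nat \<Rightarrow> real" and U :: "real \<Rightarrow> real"
  assumes "\<forall>x\<in>{q i..q (Suc i)}. U x = w i + (w (Suc i) - w i) / (q (Suc i) - q i) * (x - q i)"
    and "x \<in> {q i<..<q (Suc i)}"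
  shows "deriv U x = (w (Suc i) - w i) / (q (Suc i) - q i)"
proof -
  have "DERIV (\<lambda>y. w i + (w (Suc i) - w i) / (q (Suc i) - q i) * (y - q i)) x :> (w (Suc i) - w i) / (q (Suc i) - q i)"
    using assms(2) by (auto intro!: derivative_eq_intros)
  then have "DERIV U x :> (w (Suc i) - w i) / (q (Suc i) - q i)"
    by (rule has_field_derivative_transform_within_open[where S="{q i<..<q (Suc i)}"]) (use assms in auto)
  then show ?thesis by (rule DERIV_imp_deriv)
qed

lemma integral_rep:
  fixes q w vv :: "nat \<Rightarrow> real" and U \<phi> g \<Phi> :: "real \<Rightarrow> real" and r n :: nat and a b :: real
  assumes qa: "q 0 = a" and qb: "q (Suc n) = b" and qmono: "\<forall>i\<le>n. q i < q (Suc i)"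
    and U: "\<forall>i\<le>n. \<forall>x\<in>{q i..q (Suc i)}. U x = w i + (w (Suc i) - w i) / (q (Suc i) - q i) * (x - q i)"
    and cont: "continuous_on {a..b} \<phi>" and wd: "weak_deriv_on a b \<phi> g"
    and vv: "\<And>i. vv i = (w (Suc i) - w i) / (q (Suc i) - q i)"
    and \<Phi>: "\<And>y. \<Phi> y = integral {a..y} \<phi>"
  shows "integral {a..b} (\<lambda>x. \<bar>deriv U x\<bar> ^ (r - 2) * deriv U x * \<phi> x)
           = (\<Sum>i\<le>n. \<bar>vv i\<bar> ^ (r - 2) * vv i * (\<Phi> (q (Suc i)) - \<Phi> (q i)))"
    and "integral {a..b} (\<lambda>x. (1 / real r) * \<bar>deriv U x\<bar> ^ r * \<phi> x)
           = (\<Sum>i\<le>n. (1 / real r) * \<bar>vv i\<bar> ^ r * (\<Phi> (q (Suc i)) - \<Phi> (q i)))"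
    and "integral {a..b} (\<lambda>x. U x * \<bar>deriv U x\<bar> ^ (r - 2) * deriv U x * g x)
           = (\<Sum>i\<le>n. \<bar>vv i\<bar> ^ (r - 2) * vv i *
                 (w (Suc i) * \<phi> (q (Suc i)) - w i * \<phi> (q i) - vv i * (\<Phi> (q (Suc i)) - \<Phi> (q i))))"
proof -
  have qr: "a \<le> q i \<and> q i \<le> b" if "i \<le> Suc n" for i
    using chain_le[OF qmono, of 0 i] chain_le[OF qmono, of i "Suc n"] that qa qb by auto
  have ab: "{q 0..q (Suc n)} = {a..b}" using qa qb by simp
  have \<phi>int: "\<phi> integrable_on {a..b}" by (rule integrable_continuous_interval[OF cont])
  have \<phi>piece: "(\<phi> has_integral (\<Phi> (q (Suc i)) - \<Phi> (q i))) {q i..q (Suc i)}" if i: "i \<le> n" for i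
  proof -
    have le: "a \<le> q i" "q i \<le> q (Suc i)" "q (Suc i) \<le> b"
      using qr[of i] qr[of "Suc i"] qmono i by (auto simp: less_imp_le)
    have "\<phi> integrable_on {a..q (Suc i)}" by (rule integrable_on_subinterval[OF \<phi>int]) (use le in auto)
    then have "integral {a..q i} \<phi> + integral {q i..q (Suc i)} \<phi> = integral {a..q (Suc i)} \<phi>"
      by (rule Henstock_Kurzweil_Integration.integral_combine[rotated 2]) (use le in auto)
    moreover have "\<phi> integrable_on {q i..q (Suc i)}" by (rule integrable_on_subinterval[OF \<phi>int]) (use le in auto)
    ultimately show ?thesis using \<Phi> by (metis add_diff_cancel_left' integrable_integral)
  qed
  have dU: "deriv U x = vv i" if "i \<le> n" "x \<in> {q i<..<q (Suc i)}" for i x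
    using piece_deriv[of q i U w x] U that vv by auto
  have negl: "negligible {q i, q (Suc i)}" for i by (rule negligible_finite) simp
  have open_piece: "x \<in> {q i<..<q (Suc i)}" if "x \<in> {q i..q (Suc i)} - {q i, q (Suc i)}" for i x
    using that by auto
  show "integral {a..b} (\<lambda>x. \<bar>deriv U x\<bar> ^ (r - 2) * deriv U x * \<phi> x)
           = (\<Sum>i\<le>n. \<bar>vv i\<bar> ^ (r - 2) * vv i * (\<Phi> (q (Suc i)) - \<Phi> (q i)))"
  proof -
    have "((\<lambda>x. \<bar>deriv U x\<bar> ^ (r - 2) * deriv U x * \<phi> x) has_integral
        (\<Sum>i\<le>n. \<bar>vv i\<bar> ^ (r - 2) * vv i * (\<Phi> (q (Suc i)) - \<Phi> (q i)))) {q 0..q (Suc n)}"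
    proof (rule piecewise_has_integral[OF qmono])
      fix i assume i: "i \<le> n"
      show "((\<lambda>x. \<bar>deriv U x\<bar> ^ (r - 2) * deriv U x * \<phi> x) has_integral
          \<bar>vv i\<bar> ^ (r - 2) * vv i * (\<Phi> (q (Suc i)) - \<Phi> (q i))) {q i..q (Suc i)}"
      proof (rule has_integral_spike[OF negl[of i] _ has_integral_mult_right[OF \<phi>piece[OF i]]])
        fix x assume x: "x \<in> {q i..q (Suc i)} - {q i, q (Suc i)}"
        show "\<bar>deriv U x\<bar> ^ (r - 2) * deriv U x * \<phi> x = \<bar>vv i\<bar> ^ (r - 2) * vv i * \<phi> x"
          using dU[OF i open_piece[OF x]] by simp
      qed
    qed
    then show ?thesis unfolding ab by (rule integral_unique)
  qed
  show "integral {a..b} (\<lambda>x. (1 / real r) * \<bar>deriv U x\<bar> ^ r * \<phi> x)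
           = (\<Sum>i\<le>n. (1 / real r) * \<bar>vv i\<bar> ^ r * (\<Phi> (q (Suc i)) - \<Phi> (q i)))"
  proof -
    have "((\<lambda>x. (1 / real r) * \<bar>deriv U x\<bar> ^ r * \<phi> x) has_integral
        (\<Sum>i\<le>n. (1 / real r) * \<bar>vv i\<bar> ^ r * (\<Phi> (q (Suc i)) - \<Phi> (q i)))) {q 0..q (Suc n)}"
    proof (rule piecewise_has_integral[OF qmono])
      fix i assume i: "i \<le> n"
      show "((\<lambda>x. (1 / real r) * \<bar>deriv U x\<bar> ^ r * \<phi> x) has_integral
          (1 / real r) * \<bar>vv i\<bar> ^ r * (\<Phi> (q (Suc i)) - \<Phi> (q i))) {q i..q (Suc i)}"
      proof (rule has_integral_spike[OF negl[of i] _ has_integral_mult_right[OF \<phi>piece[OF i]]])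
        fix x assume x: "x \<in> {q i..q (Suc i)} - {q i, q (Suc i)}"
        show "(1 / real r) * \<bar>deriv U x\<bar> ^ r * \<phi> x = (1 / real r) * \<bar>vv i\<bar> ^ r * \<phi> x"
          using dU[OF i open_piece[OF x]] by simp
      qed
    qed
    then show ?thesis unfolding ab by (rule integral_unique)
  qed
  show "integral {a..b} (\<lambda>x. U x * \<bar>deriv U x\<bar> ^ (r - 2) * deriv U x * g x)
           = (\<Sum>i\<le>n. \<bar>vv i\<bar> ^ (r - 2) * vv i *
                 (w (Suc i) * \<phi> (q (Suc i)) - w i * \<phi> (q i) - vv i * (\<Phi> (q (Suc i)) - \<Phi> (q i))))"
  proof -
    have gabs: "g absolutely_integrable_on {a..b}" using wd unfolding weak_deriv_on_def by simp
    have "((\<lambda>x. U x * \<bar>deriv U x\<bar> ^ (r - 2) * deriv U x * g x) has_integral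
        (\<Sum>i\<le>n. \<bar>vv i\<bar> ^ (r - 2) * vv i *
                 (w (Suc i) * \<phi> (q (Suc i)) - w i * \<phi> (q i) - vv i * (\<Phi> (q (Suc i)) - \<Phi> (q i))))) {q 0..q (Suc n)}"
    proof (rule piecewise_has_integral[OF qmono])
      fix i assume i: "i \<le> n"
      define \<alpha> where "\<alpha> = w i - vv i * q i"
      define \<beta> where "\<beta> = vv i"
      have le: "a \<le> q i" "q i < q (Suc i)" "q (Suc i) \<le> b"
        using qr[of i] qr[of "Suc i"] qmono i by auto
      have hne: "q (Suc i) - q i \<noteq> 0" using le by simp
      have lint: "(\<lambda>x. (\<alpha> + \<beta> * x) * g x) integrable_on {q i..q (Suc i)}"
      proof -
        have "(\<lambda>x. (\<alpha> + \<beta> * x) * g x) absolutely_integrable_on {a..b}"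
          by (rule abs_int_cont_mult[OF _ gabs]) (intro continuous_intros)
        then have "(\<lambda>x. (\<alpha> + \<beta> * x) * g x) integrable_on {a..b}"
          unfolding absolutely_integrable_on_def by simp
        then show ?thesis by (rule integrable_on_subinterval) (use le in auto)
      qed
      have wa: "integral {q i..q (Suc i)} (\<lambda>x. (\<alpha> + \<beta> * x) * g x)
          = (\<alpha> + \<beta> * q (Suc i)) * \<phi> (q (Suc i)) - (\<alpha> + \<beta> * q i) * \<phi> (q i) - \<beta> * integral {q i..q (Suc i)} \<phi>"
        by (rule weak_affine[OF cont wd]) (use le in auto)
      have f: "vv i * (q (Suc i) - q i) = w (Suc i) - w i" using hne by (simp add: vv)
      have e1: "\<alpha> + \<beta> * q (Suc i) = w (Suc i)"
        using f unfolding \<alpha>_def \<beta>_def right_diff_distrib by linarith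
      have e2: "\<alpha> + \<beta> * q i = w i" by (simp add: \<alpha>_def \<beta>_def)
      have e3: "integral {q i..q (Suc i)} \<phi> = \<Phi> (q (Suc i)) - \<Phi> (q i)"
        using \<phi>piece[OF i] by (rule integral_unique)
      have hi: "((\<lambda>x. (\<alpha> + \<beta> * x) * g x) has_integral
          (w (Suc i) * \<phi> (q (Suc i)) - w i * \<phi> (q i) - vv i * (\<Phi> (q (Suc i)) - \<Phi> (q i)))) {q i..q (Suc i)}"
      proof -
        have val: "integral {q i..q (Suc i)} (\<lambda>x. (\<alpha> + \<beta> * x) * g x)
          = w (Suc i) * \<phi> (q (Suc i)) - w i * \<phi> (q i) - vv i * (\<Phi> (q (Suc i)) - \<Phi> (q i))"
          using wa e1 e2 e3 by (simp add: \<beta>_def)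
        show ?thesis using integrable_integral[OF lint] by (simp only: val)
      qed
      show "((\<lambda>x. U x * \<bar>deriv U x\<bar> ^ (r - 2) * deriv U x * g x) has_integral
          \<bar>vv i\<bar> ^ (r - 2) * vv i *
                 (w (Suc i) * \<phi> (q (Suc i)) - w i * \<phi> (q i) - vv i * (\<Phi> (q (Suc i)) - \<Phi> (q i)))) {q i..q (Suc i)}"
      proof (rule has_integral_spike[OF negl[of i] _ has_integral_mult_right[OF hi]])
        fix x assume x: "x \<in> {q i..q (Suc i)} - {q i, q (Suc i)}"
        have xo: "x \<in> {q i<..<q (Suc i)}" by (rule open_piece[OF x])
        have "U x = w i + vv i * (x - q i)" using U i xo vv by auto
        then have "U x = \<alpha> + \<beta> * x" by (simp add: \<alpha>_def \<beta>_def algebra_simps)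
        then show "U x * \<bar>deriv U x\<bar> ^ (r - 2) * deriv U x * g x
            = \<bar>vv i\<bar> ^ (r - 2) * vv i * ((\<alpha> + \<beta> * x) * g x)"
          using dU[OF i xo] by (simp add: mult_ac)
      qed
    qed
    then show ?thesis unfolding ab by (rule integral_unique)
  qed
qed

theorem mainTheorem9:
  fixes r n :: nat and a b :: real and I :: "real set"
    and Q P uh :: "nat \<Rightarrow> real \<Rightarrow> real" and u :: "real \<Rightarrow> real \<Rightarrow> real"
  assumes r: "even r" "r \<ge> 2"
    and ab: "a < b"
    and I: "is_interval I"
    and n: "n \<ge> 1"
    and Qends: "\<forall>t\<in>I. Q 0 t = a \<and> Q (Suc n) t = b"
    and Qmono: "\<forall>t\<in>I. \<forall>i\<le>n. Q i t < Q (Suc i) t"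
    and uends: "\<forall>t\<in>I. uh 0 t = 0 \<and> uh (Suc n) t = 0"
    and Psys: "\<forall>t\<in>I. \<forall>i\<in>{1..n}.
       P i t = - (\<bar>(uh (Suc i) t - uh i t) / (Q (Suc i) t - Q i t)\<bar> ^ (r - 2)
                   * ((uh (Suc i) t - uh i t) / (Q (Suc i) t - Q i t)))
               + \<bar>(uh i t - uh (i - 1) t) / (Q i t - Q (i - 1) t)\<bar> ^ (r - 2)
                   * ((uh i t - uh (i - 1) t) / (Q i t - Q (i - 1) t))"
    and Qode: "\<forall>t\<in>I. \<forall>i\<in>{1..n}. ((\<lambda>s. Q i s) has_real_derivative uh i t) (at t within I)"
    and Pode: "\<forall>t\<in>I. \<forall>i\<in>{1..n}. ((\<lambda>s. P i s) has_real_derivative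
       ((real r - 1) / real r) *
         (\<bar>(uh (Suc i) t - uh i t) / (Q (Suc i) t - Q i t)\<bar> ^ r
          - \<bar>(uh i t - uh (i - 1) t) / (Q i t - Q (i - 1) t)\<bar> ^ r)) (at t within I)"
    and u_def: "\<forall>t\<in>I. \<forall>i\<le>n. \<forall>x\<in>{Q i t..Q (Suc i) t}.
       u x t = uh i t + (uh (Suc i) t - uh i t) / (Q (Suc i) t - Q i t) * (x - Q i t)"
  shows "\<exists>c :: real \<Rightarrow> real. \<forall>\<phi> \<phi>x. W1r0 r a b \<phi> \<phi>x \<longrightarrow> (\<forall>t\<in>I.
     ((\<lambda>s. integral {a..b} (\<lambda>x. \<bar>deriv (\<lambda>y. u y s) x\<bar> ^ (r - 2) * deriv (\<lambda>y. u y s) x * \<phi> x))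
       has_real_derivative
         (c t * integral {a..b} \<phi>
          + integral {a..b} (\<lambda>x. (1 / real r) * \<bar>deriv (\<lambda>y. u y t) x\<bar> ^ r * \<phi> x)
          + integral {a..b} (\<lambda>x. u x t * \<bar>deriv (\<lambda>y. u y t) x\<bar> ^ (r - 2)
                                  * deriv (\<lambda>y. u y t) x * \<phi>x x)))
       (at t within I))"
proof -
  have r2: "r \<ge> 2" using r by simp
  have N0: "0 < r - 1" using r2 by simp
  have oddN: "odd (r - 1)" using r r2 by simp
  have rr: "r - 1 - 1 = r - 2" by simp
  have rpos: "real r > 0" using r2 by simp
  define h where "h = (\<lambda>i s. Q (Suc i) s - Q i s)"
  define v where "v = (\<lambda>i s. (uh (Suc i) s - uh i s) / (Q (Suc i) s - Q i s))"
  define m where "m = (\<lambda>i s. \<bar>v i s\<bar> ^ (r - 2) * v i s)"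
  define ee where "ee = (\<lambda>i s. \<bar>v i s\<bar> ^ r)"
  define Dm where "Dm = (\<lambda>t. SOME D. (m n has_real_derivative D) (at t within I))"
  define c where "c = (\<lambda>t. Dm t + (real r - 1) / real r * ee n t)"
  have vprev: "v (i - 1) s = (uh i s - uh (i - 1) s) / (Q i s - Q (i - 1) s)" if "1 \<le> i" for i s
  proof -
    have "Suc (i - 1) = i" using that by simp
    then show ?thesis by (simp add: v_def)
  qed
  have Psys': "P i s = m (i - 1) s - m i s" if "s \<in> I" "i \<in> {1..n}" for i s
  proof -
    have "P i s = - (\<bar>v i s\<bar> ^ (r - 2) * v i s) + \<bar>v (i - 1) s\<bar> ^ (r - 2) * v (i - 1) s"
      using Psys that vprev[of i s] by (simp add: v_def)
    then show ?thesis by (simp add: m_def)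
  qed
  have Pode': "(P i has_real_derivative (real r - 1) / real r * (ee i t - ee (i - 1) t)) (at t within I)"
    if "t \<in> I" "i \<in> {1..n}" for i t
    using Pode that vprev[of i t] by (simp add: v_def ee_def)
  have hpos: "h i s > 0" if "s \<in> I" "i \<le> n" for i s using Qmono that by (simp add: h_def)
  have Qd: "(Q i has_real_derivative uh i t) (at t within I)" if t: "t \<in> I" and i: "i \<le> Suc n" for i t
  proof -
    consider "i = 0" | "i = Suc n" | "i \<in> {1..n}" using i by force
    then show ?thesis
    proof cases
      case 1
      have "((\<lambda>s. a) has_real_derivative uh i t) (at t within I)" using uends t 1 by simp
      then show ?thesis
        by (rule has_field_derivative_transform_within[where d=1]) (use t Qends 1 in auto)
    next
      case 2
      have "((\<lambda>s. b) has_real_derivative uh i t) (at t within I)" using uends t 2 by simp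
      then show ?thesis
        by (rule has_field_derivative_transform_within[where d=1]) (use t Qends 2 in auto)
    next
      case 3
      then show ?thesis using Qode t by simp
    qed
  qed
  have vm: "root (r - 1) (m i s) = v i s" for i s
  proof -
    from root_m[OF N0, of "v i s"] have "root (r - 1) (\<bar>v i s\<bar> ^ (r - 2) * v i s) = v i s"
      by (simp only: rr)
    then show ?thesis by (simp only: m_def)
  qed
  have mv: "m i s * v i s = ee i s" for i s
    using m_times_v[OF r2, of "v i s"] by (simp add: m_def ee_def)
  have hv: "h i s * v i s = uh (Suc i) s - uh i s" if "s \<in> I" "i \<le> n" for i s
    using hpos[OF that] by (simp add: h_def v_def)
  define T where "T = (\<lambda>i s. \<Sum>j\<in>{Suc i..n}. P j s)"
  define T' where "T' = (\<lambda>t i. \<Sum>j\<in>{Suc i..n}. (real r - 1) / real r * (ee j t - ee (j - 1) t))"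
  have mT: "m n s + T i s = m i s" if s: "s \<in> I" and i: "i \<le> n" for i s
  proof -
    have "T i s = (\<Sum>j\<in>{Suc i..n}. (- m j s) - (- m (j - 1) s))"
      unfolding T_def by (rule sum.cong) (use s Psys' in auto)
    also have "\<dots> = - m n s - (- m i s)" by (rule telescope_up[OF i])
    finally show ?thesis by simp
  qed
  have mderiv: "(m n has_real_derivative Dm t) (at t within I)" if t: "t \<in> I" for t
  proof -
    have "\<exists>D. (m n has_real_derivative D) (at t within I)"
    proof (rule implicit_deriv[where h=h and T=T and N="r - 1" and
          h'="\<lambda>i. uh (Suc i) t - uh i t" and T'="T' t" and \<gamma>="(real r - 1) / real r * ee n t", OF t])
      fix i assume i: "i \<le> n"
      show "(h i has_real_derivative uh (Suc i) t - uh i t) (at t within I)"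
        unfolding h_def using Qd[OF t, of "Suc i"] Qd[OF t, of i] i by (auto intro!: DERIV_diff)
    next
      fix i assume i: "i \<le> n"
      show "(T i has_real_derivative T' t i) (at t within I)"
        unfolding T_def T'_def by (rule DERIV_sum) (use Pode' t in auto)
    next
      fix s assume s: "s \<in> I"
      have "(\<Sum>i\<le>n. h i s * root (r - 1) (m n s + T i s)) = (\<Sum>i\<le>n. uh (Suc i) s - uh i s)"
        by (rule sum.cong) (use mT[OF s] vm hv[OF s] in auto)
      also have "\<dots> = uh (Suc n) s - uh 0 s" by (rule telescope_atMost)
      also have "\<dots> = 0" using uends s by simp
      finally show "(\<Sum>i\<le>n. h i s * root (r - 1) (m n s + T i s)) = 0" .
    next
      fix s i assume "s \<in> I" "i \<le> n" then show "0 < h i s" by (rule hpos)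
    next
      show "1 \<le> r - 1" using r2 by simp
      show "odd (r - 1)" by (rule oddN)
    next
      fix i assume i: "i \<le> n" and z: "m n t + T i t = 0"
      then have "m i t = 0" using mT[OF t i] by simp
      then have "v i t = 0" by (auto simp: m_def)
      then have e0: "ee i t = 0" using r2 by (simp add: ee_def)
      have "T' t i = (real r - 1) / real r * (\<Sum>j\<in>{Suc i..n}. ee j t - ee (j - 1) t)"
        by (simp add: T'_def sum_distrib_left)
      also have "\<dots> = (real r - 1) / real r * (ee n t - ee i t)"
      proof -
        have tel: "(\<Sum>j\<in>{Suc i..n}. ee j t - ee (j - 1) t) = ee n t - ee i t" by (rule telescope_up[OF i])
        show ?thesis by (simp only: tel)
      qed
      finally show "T' t i = (real r - 1) / real r * ee n t" using e0 by simp
    qed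
    then show ?thesis unfolding Dm_def by (rule someI_ex)
  qed
  show ?thesis
  proof (intro exI[of _ c] allI impI ballI)
    fix \<phi> \<phi>x :: "real \<Rightarrow> real" and t :: real
    assume W: "W1r0 r a b \<phi> \<phi>x" and t: "t \<in> I"
    have cont: "continuous_on {a..b} \<phi>" and wd: "weak_deriv_on a b \<phi> \<phi>x"
      using W unfolding W1r0_def by auto
    define \<Phi> where "\<Phi> = (\<lambda>y. integral {a..y} \<phi>)"
    have \<Phi>a: "\<Phi> a = 0" by (simp add: \<Phi>_def)
    have \<Phi>b: "integral {a..b} \<phi> = \<Phi> b" by (simp add: \<Phi>_def)
    have rep1: "integral {a..b} (\<lambda>x. \<bar>deriv (\<lambda>y. u y s) x\<bar> ^ (r - 2) * deriv (\<lambda>y. u y s) x * \<phi> x)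
        = (\<Sum>i\<le>n. m i s * (\<Phi> (Q (Suc i) s) - \<Phi> (Q i s)))" if s: "s \<in> I" for s
    proof -
      have "integral {a..b} (\<lambda>x. \<bar>deriv (\<lambda>y. u y s) x\<bar> ^ (r - 2) * deriv (\<lambda>y. u y s) x * \<phi> x)
        = (\<Sum>i\<le>n. \<bar>v i s\<bar> ^ (r - 2) * v i s * (\<Phi> (Q (Suc i) s) - \<Phi> (Q i s)))"
        by (rule integral_rep(1)[where q="\<lambda>i. Q i s" and w="\<lambda>i. uh i s" and U="\<lambda>y. u y s"
              and vv="\<lambda>i. v i s" and \<Phi>=\<Phi> and \<phi>=\<phi> and g=\<phi>x and r=r and n=n and a=a and b=b])
           (use s Qends Qmono u_def cont wd in \<open>auto simp: v_def \<Phi>_def\<close>)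
      then show ?thesis by (simp add: m_def)
    qed
    have rep2: "integral {a..b} (\<lambda>x. (1 / real r) * \<bar>deriv (\<lambda>y. u y t) x\<bar> ^ r * \<phi> x)
        = (\<Sum>i\<le>n. (1 / real r) * ee i t * (\<Phi> (Q (Suc i) t) - \<Phi> (Q i t)))"
    proof -
      have "integral {a..b} (\<lambda>x. (1 / real r) * \<bar>deriv (\<lambda>y. u y t) x\<bar> ^ r * \<phi> x)
        = (\<Sum>i\<le>n. (1 / real r) * \<bar>v i t\<bar> ^ r * (\<Phi> (Q (Suc i) t) - \<Phi> (Q i t)))"
        by (rule integral_rep(2)[where q="\<lambda>i. Q i t" and w="\<lambda>i. uh i t" and U="\<lambda>y. u y t"
              and vv="\<lambda>i. v i t" and \<Phi>=\<Phi> and \<phi>=\<phi> and g=\<phi>x and r=r and n=n and a=a and b=b])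
           (use t Qends Qmono u_def cont wd in \<open>auto simp: v_def \<Phi>_def\<close>)
      then show ?thesis by (simp add: ee_def)
    qed
    have rep3: "integral {a..b} (\<lambda>x. u x t * \<bar>deriv (\<lambda>y. u y t) x\<bar> ^ (r - 2) * deriv (\<lambda>y. u y t) x * \<phi>x x)
        = (\<Sum>i\<le>n. m i t * (uh (Suc i) t * \<phi> (Q (Suc i) t) - uh i t * \<phi> (Q i t)
                            - v i t * (\<Phi> (Q (Suc i) t) - \<Phi> (Q i t))))"
    proof -
      have "integral {a..b} (\<lambda>x. u x t * \<bar>deriv (\<lambda>y. u y t) x\<bar> ^ (r - 2) * deriv (\<lambda>y. u y t) x * \<phi>x x)
        = (\<Sum>i\<le>n. \<bar>v i t\<bar> ^ (r - 2) * v i t * (uh (Suc i) t * \<phi> (Q (Suc i) t) - uh i t * \<phi> (Q i t)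
                            - v i t * (\<Phi> (Q (Suc i) t) - \<Phi> (Q i t))))"
        by (rule integral_rep(3)[where q="\<lambda>i. Q i t" and w="\<lambda>i. uh i t" and U="\<lambda>y. u y t"
              and vv="\<lambda>i. v i t" and \<Phi>=\<Phi> and \<phi>=\<phi> and g=\<phi>x and r=r and n=n and a=a and b=b])
           (use t Qends Qmono u_def cont wd in \<open>auto simp: v_def \<Phi>_def\<close>)
      then show ?thesis by (simp add: m_def)
    qed
    have F2: "(\<Sum>i\<le>n. m i s * (\<Phi> (Q (Suc i) s) - \<Phi> (Q i s))) = m n s * \<Phi> b + (\<Sum>i\<in>{1..n}. P i s * \<Phi> (Q i s))"
      if s: "s \<in> I" for s
    proof -
      have "(\<Sum>i\<le>n. m i s * (\<Phi> (Q (Suc i) s) - \<Phi> (Q i s)))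
          = m n s * \<Phi> (Q (Suc n) s) - m 0 s * \<Phi> (Q 0 s) - (\<Sum>i\<in>{1..n}. (m i s - m (i - 1) s) * \<Phi> (Q i s))"
        by (rule sum_by_parts[of "\<lambda>i. m i s" "\<lambda>i. \<Phi> (Q i s)" n])
      also have "(\<Sum>i\<in>{1..n}. (m i s - m (i - 1) s) * \<Phi> (Q i s)) = (\<Sum>i\<in>{1..n}. - (P i s * \<Phi> (Q i s)))"
      proof (rule sum.cong)
        fix i assume "i \<in> {1..n}"
        then have "P i s = m (i - 1) s - m i s" by (rule Psys'[OF s])
        then show "(m i s - m (i - 1) s) * \<Phi> (Q i s) = - (P i s * \<Phi> (Q i s))" by (simp only:) (simp add: algebra_simps)
      qed simp
      also have "\<dots> = - (\<Sum>i\<in>{1..n}. P i s * \<Phi> (Q i s))" by (rule sum_negf)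
      finally show ?thesis using Qends s \<Phi>a by simp
    qed
    have d\<Phi>: "DERIV \<Phi> y :> \<phi> y" if "a < y" "y < b" for y
    proof -
      have "((\<lambda>u. integral {a..u} \<phi>) has_vector_derivative \<phi> y) (at y within {a..b})"
        by (rule integral_has_vector_derivative[OF cont]) (use that in auto)
      moreover have "at y within {a..b} = at y" by (rule at_within_interior) (use that in auto)
      ultimately show ?thesis by (simp add: \<Phi>_def has_real_derivative_iff_has_vector_derivative)
    qed
    have Qin: "a < Q i t \<and> Q i t < b" if i: "i \<in> {1..n}" for i
    proof -
      have m1: "\<forall>j\<le>n. Q j t < Q (Suc j) t" using Qmono t by simp
      have "Q 1 t \<le> Q i t" using chain_le[OF m1, of 1 i] i by simp
      moreover have "Q i t \<le> Q n t" using chain_le[OF m1, of i n] i by simp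
      moreover have "Q 0 t < Q 1 t" "Q n t < Q (Suc n) t" using m1 n by auto
      ultimately show ?thesis using Qends t by auto
    qed
    define V where "V = Dm t * \<Phi> b + (\<Sum>i\<in>{1..n}. (real r - 1) / real r * (ee i t - ee (i - 1) t) * \<Phi> (Q i t)
                                          + \<phi> (Q i t) * uh i t * P i t)"
    have dF2: "((\<lambda>s. m n s * \<Phi> b + (\<Sum>i\<in>{1..n}. P i s * \<Phi> (Q i s))) has_real_derivative V) (at t within I)"
      unfolding V_def
    proof (rule DERIV_add)
      show "((\<lambda>s. m n s * \<Phi> b) has_real_derivative Dm t * \<Phi> b) (at t within I)"
        by (rule DERIV_cmult_right[OF mderiv[OF t]])
      show "((\<lambda>s. \<Sum>i\<in>{1..n}. P i s * \<Phi> (Q i s)) has_real_derivative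
          (\<Sum>i\<in>{1..n}. (real r - 1) / real r * (ee i t - ee (i - 1) t) * \<Phi> (Q i t)
                        + \<phi> (Q i t) * uh i t * P i t)) (at t within I)"
      proof (rule DERIV_sum)
        fix i assume i: "i \<in> {1..n}"
        have dq: "DERIV \<Phi> (Q i t) :> \<phi> (Q i t)" using d\<Phi> Qin[OF i] by auto
        have qd: "(Q i has_real_derivative uh i t) (at t within I)" using Qd[OF t, of i] i by simp
        have "((\<lambda>s. \<Phi> (Q i s)) has_real_derivative \<phi> (Q i t) * uh i t) (at t within I)"
          by (rule DERIV_chain2[OF dq qd])
        from DERIV_mult[OF Pode'[OF t i] this]
        show "((\<lambda>s. P i s * \<Phi> (Q i s)) has_real_derivative
            (real r - 1) / real r * (ee i t - ee (i - 1) t) * \<Phi> (Q i t) + \<phi> (Q i t) * uh i t * P i t) (at t within I)" .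
      qed
    qed
    have dF: "((\<lambda>s. integral {a..b} (\<lambda>x. \<bar>deriv (\<lambda>y. u y s) x\<bar> ^ (r - 2) * deriv (\<lambda>y. u y s) x * \<phi> x))
        has_real_derivative V) (at t within I)"
      by (rule has_field_derivative_transform_within[OF dF2 _ t, where d=1]) (simp_all add: rep1 F2)
    define z where "z = (\<lambda>i. uh i t * \<phi> (Q i t))"
    define dP where "dP = (\<lambda>i. \<Phi> (Q (Suc i) t) - \<Phi> (Q i t))"
    define X where "X = (\<Sum>i\<in>{1..n}. (ee i t - ee (i - 1) t) * \<Phi> (Q i t))"
    define Y where "Y = (\<Sum>i\<in>{1..n}. P i t * z i)"
    define E where "E = (\<Sum>i\<le>n. ee i t * dP i)"
    have stepA: "(\<Sum>i\<le>n. m i t * (uh (Suc i) t * \<phi> (Q (Suc i) t) - uh i t * \<phi> (Q i t)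
                            - v i t * (\<Phi> (Q (Suc i) t) - \<Phi> (Q i t))))
        = (\<Sum>i\<le>n. m i t * (z (Suc i) - z i)) - E"
    proof -
      have "(\<Sum>i\<le>n. m i t * (uh (Suc i) t * \<phi> (Q (Suc i) t) - uh i t * \<phi> (Q i t)
                            - v i t * (\<Phi> (Q (Suc i) t) - \<Phi> (Q i t))))
          = (\<Sum>i\<le>n. m i t * (z (Suc i) - z i) - ee i t * dP i)"
        by (rule sum.cong) (simp_all add: z_def dP_def right_diff_distrib mv[symmetric] mult.assoc)
      then show ?thesis by (simp add: sum_subtractf E_def)
    qed
    have stepB: "(\<Sum>i\<le>n. m i t * (z (Suc i) - z i)) = Y"
    proof -
      have "(\<Sum>i\<le>n. m i t * (z (Suc i) - z i))
          = m n t * z (Suc n) - m 0 t * z 0 - (\<Sum>i\<in>{1..n}. (m i t - m (i - 1) t) * z i)"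
        by (rule sum_by_parts[of "\<lambda>i. m i t" z n])
      also have "(\<Sum>i\<in>{1..n}. (m i t - m (i - 1) t) * z i) = (\<Sum>i\<in>{1..n}. - (P i t * z i))"
      proof (rule sum.cong)
        fix i assume "i \<in> {1..n}"
        then have "P i t = m (i - 1) t - m i t" by (rule Psys'[OF t])
        then show "(m i t - m (i - 1) t) * z i = - (P i t * z i)" by (simp only:) (simp add: algebra_simps)
      qed simp
      also have "\<dots> = - Y" by (simp add: sum_negf Y_def)
      finally show ?thesis using uends t by (simp add: z_def)
    qed
    have stepC: "E = ee n t * \<Phi> b - X"
    proof -
      have "E = ee n t * \<Phi> (Q (Suc n) t) - ee 0 t * \<Phi> (Q 0 t) - X"
        unfolding E_def dP_def X_def by (rule sum_by_parts[of "\<lambda>i. ee i t" "\<lambda>i. \<Phi> (Q i t)" n])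
      then show ?thesis using Qends t \<Phi>a by simp
    qed
    have stepD: "(\<Sum>i\<le>n. (1 / real r) * ee i t * (\<Phi> (Q (Suc i) t) - \<Phi> (Q i t))) = (1 / real r) * E"
      by (simp add: E_def dP_def sum_distrib_left mult.assoc)
    have stepV: "V = Dm t * \<Phi> b + (real r - 1) / real r * X + Y"
      by (simp add: V_def X_def Y_def z_def sum.distrib sum_distrib_left mult_ac)
    have val: "c t * integral {a..b} \<phi>
          + integral {a..b} (\<lambda>x. (1 / real r) * \<bar>deriv (\<lambda>y. u y t) x\<bar> ^ r * \<phi> x)
          + integral {a..b} (\<lambda>x. u x t * \<bar>deriv (\<lambda>y. u y t) x\<bar> ^ (r - 2)
                                  * deriv (\<lambda>y. u y t) x * \<phi>x x) = V"
    proof -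
      have "c t * integral {a..b} \<phi>
          + integral {a..b} (\<lambda>x. (1 / real r) * \<bar>deriv (\<lambda>y. u y t) x\<bar> ^ r * \<phi> x)
          + integral {a..b} (\<lambda>x. u x t * \<bar>deriv (\<lambda>y. u y t) x\<bar> ^ (r - 2)
                                  * deriv (\<lambda>y. u y t) x * \<phi>x x)
          = (Dm t + (real r - 1) / real r * ee n t) * \<Phi> b + (1 / real r) * (ee n t * \<Phi> b - X)
            + (Y - (ee n t * \<Phi> b - X))"
        unfolding rep2 rep3 stepD stepA stepB stepC \<Phi>b c_def by simp
      also have "\<dots> = V" unfolding stepV using rpos by (simp add: field_simps)
      finally show ?thesis .
    qed
    show "((\<lambda>s. integral {a..b} (\<lambda>x. \<bar>deriv (\<lambda>y. u y s) x\<bar> ^ (r - 2) * deriv (\<lambda>y. u y s) x * \<phi> x))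
       has_real_derivative
         (c t * integral {a..b} \<phi>
          + integral {a..b} (\<lambda>x. (1 / real r) * \<bar>deriv (\<lambda>y. u y t) x\<bar> ^ r * \<phi> x)
          + integral {a..b} (\<lambda>x. u x t * \<bar>deriv (\<lambda>y. u y t) x\<bar> ^ (r - 2)
                                  * deriv (\<lambda>y. u y t) x * \<phi>x x)))
       (at t within I)"
      unfolding val by (rule dF)
  qed
qed

end
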